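(* Let $G=\langle A\mid R\rangle$ be a finitely presented group ($A$, $R$ finite) with Dehn function $D$, and suppose $G\in\mathcal{B}_f$ for some function $f\in\mathfrak{F}$ that is not identically zero. Let $p,q\in\mathfrak{F}$ satisfy $p\preceq D\preceq q$. Then there exist constants $C,K,M,N$ such that $p(n)\le C n^2 q(Kf(Mn))$ for all $n\ge N$. In particular, if $p=q=n^d$ for some $d>2$, then $n^{(d-2)/d}\preceq f$; and if $p=q=\mathfrak{e}$, then $\mathfrak{i}\preceq f$.
   Context: The Dehn function of $G=\langle A\mid R\rangle$ is $D(n)=\max\{\mathrm{Area}(w): w\in S^*, |w|\le n, \pi(w)=e\}$, where $S=A\cup A^{-1}$ and $\mathrm{Area}(w)$ is the least $k$ such that $w=\prod_{i=1}^k v_i r_i^{\pm1}v_i^{-1}$ in the free group $F(A)$ with $r_i\in R$. $\mathfrak{i}(n)=n$ and $\mathfrak{e}(n)=\exp(n)$. Convolution: for $w_1,\dots,w_k\in\Sigma^*$, $w_1\otimes\cdots\otimes w_k$ is the string over $(\Sigma\cup\{\diamond\})^k$ obtained by padding the shorter strings with a new symbol $\diamond$ and reading them in parallel; a relation is FA-recognizable if the set of convolutions of its tuples is regular. $\pi:S^*\to G$ is the canonical evaluation map, $d_A$ the word metric of $\Gamma(G,A)$. A Cayley automatic representation of $G$ is a bijection $\psi:L\to G$ from a regular language $L\subseteq S^*$ such that for every $a\in A$ the relation $\{(\psi^{-1}(g),\psi^{-1}(ga)) : g\in G\}$ is FA-recognizable; its function is $h(n)=\max\{d_A(\pi(w),\psi(w))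 : w\in L, |w|\le n\}$. $\mathfrak{F}$ is the set of nondecreasing functions from some interval $[Q,\infty)\cap\mathbb{N}$ to the nonnegative reals; $g\preceq f$ means there exist $N\ge0$ and positive integers $K,M$ with $g(n)\le Kf(Mn)$ for all $n\ge N$. $G\in\mathcal{B}_f$ means $G$ admits a Cayley automatic representation with $h\preceq f$ (independent of the finite generating set). *)

theory Defs
  imports Complex_Main
begin

text \<open>A letter (a, True) stands for the generator a, (a, False) for its inverse.\<close>
type_synonym 'a letter = "'a \<times> bool"

definition gens :: "'a set \<Rightarrow> 'a letter set" where
  "gens A = A \<times> UNIV"

fun inv_letter :: "'a letter \<Rightarrow> 'a letter" where
  "inv_letter (a, b) = (a, \<not> b)"

definition inv_word :: "'a letter list \<Rightarrow> 'a letter list" where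
  "inv_word w = rev (map inv_letter w)"

definition free_red1 :: "('a letter list \<times> 'a letter list) set" where
  "free_red1 = {(u @ [x, inv_letter x] @ v, u @ v) | u x v. True}"

definition free_eq :: "'a letter list \<Rightarrow> 'a letter list \<Rightarrow> bool" where
  "free_eq u v \<longleftrightarrow> (u, v) \<in> (free_red1 \<union> free_red1\<inverse>)\<^sup>*"

definition conj_prod :: "('a letter list \<times> 'a letter list \<times> bool) list \<Rightarrow> 'a letter list" where
  "conj_prod ts = concat (map (\<lambda>(v, r, e). v @ (if e then r else inv_word r) @ inv_word v) ts)"

definition valid_conjs :: "'a set \<Rightarrow> 'a letter list set \<Rightarrow> ('a letter list \<times> 'a letter list \<times> bool) list \<Rightarrow> bool" where
  "valid_conjs A R ts \<longleftrightarrow> (\<forall>(v, r, e) \<in> set ts. v \<in> lists (gens A) \<and> r \<in> R)"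

definition trivial_word :: "'a set \<Rightarrow> 'a letter list set \<Rightarrow> 'a letter list \<Rightarrow> bool" where
  "trivial_word A R w \<longleftrightarrow> (\<exists>ts. valid_conjs A R ts \<and> free_eq w (conj_prod ts))"

definition area :: "'a set \<Rightarrow> 'a letter list set \<Rightarrow> 'a letter list \<Rightarrow> nat" where
  "area A R w = (LEAST k. \<exists>ts. length ts = k \<and> valid_conjs A R ts \<and> free_eq w (conj_prod ts))"

definition dehn :: "'a set \<Rightarrow> 'a letter list set \<Rightarrow> nat \<Rightarrow> real" where
  "dehn A R n = real (Max {area A R w | w. w \<in> lists (gens A) \<and> length w \<le> n \<and> trivial_word A R w})"

definition elem :: "'a set \<Rightarrow> 'a letter list set \<Rightarrow> 'a letter list \<Rightarrow> 'a letter list set" where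
  "elem A R u = {v \<in> lists (gens A). trivial_word A R (u @ inv_word v)}"

definition grp :: "'a set \<Rightarrow> 'a letter list set \<Rightarrow> 'a letter list set set" where
  "grp A R = elem A R ` lists (gens A)"

definition word_dist :: "'a set \<Rightarrow> 'a letter list set \<Rightarrow> 'a letter list set \<Rightarrow> 'a letter list set \<Rightarrow> nat" where
  "word_dist A R g h = (LEAST k. \<exists>x \<in> lists (gens A). length x = k \<and> (\<exists>y \<in> g. elem A R (y @ x) = h))"

definition regular_lang :: "'b list set \<Rightarrow> bool" where
  "regular_lang L \<longleftrightarrow> (\<exists>(\<delta> :: nat \<Rightarrow> 'b \<Rightarrow> nat) q0 Fin.
      finite (range (foldl \<delta> q0)) \<and> L = {w. foldl \<delta> q0 w \<in> Fin})"

definition nth_opt :: "'b list \<Rightarrow> nat \<Rightarrow> 'b option" where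
  "nth_opt u i = (if i < length u then Some (u ! i) else None)"

text \<open>Convolution u \<otimes> v; the padding symbol \<diamond> is None.\<close>
definition conv :: "'b list \<Rightarrow> 'b list \<Rightarrow> ('b option \<times> 'b option) list" where
  "conv u v = map (\<lambda>i. (nth_opt u i, nth_opt v i)) [0..<max (length u) (length v)]"

definition fa_recognizable :: "('b list \<times> 'b list) set \<Rightarrow> bool" where
  "fa_recognizable Rel \<longleftrightarrow> regular_lang ((\<lambda>(u, v). conv u v) ` Rel)"

definition cayley_automatic :: "'a set \<Rightarrow> 'a letter list set \<Rightarrow> 'a letter list set \<Rightarrow>
    ('a letter list \<Rightarrow> 'a letter list set) \<Rightarrow> bool" where
  "cayley_automatic A R L \<psi> \<longleftrightarrow>
     L \<subseteq> lists (gens A) \<and> regular_lang L \<and> bij_betw \<psi> L (grp A R) \<and>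
     (\<forall>a \<in> A. fa_recognizable
        {(u, v). u \<in> L \<and> v \<in> L \<and> (\<exists>x \<in> \<psi> u. \<psi> v = elem A R (x @ [(a, True)]))})"

definition ca_function :: "'a set \<Rightarrow> 'a letter list set \<Rightarrow> 'a letter list set \<Rightarrow>
    ('a letter list \<Rightarrow> 'a letter list set) \<Rightarrow> nat \<Rightarrow> real" where
  "ca_function A R L \<psi> n = real (Max (insert 0
      {word_dist A R (elem A R w) (\<psi> w) | w. w \<in> L \<and> length w \<le> n}))"

text \<open>f is in F with domain [Q,\<infinity>); values below Q are irrelevant.\<close>
definition inF_on :: "nat \<Rightarrow> (nat \<Rightarrow> real) \<Rightarrow> bool" where
  "inF_on Q f \<longleftrightarrow> (\<forall>n\<ge>Q. f n \<ge> 0) \<and> (\<forall>m n. Q \<le> m \<longrightarrow> m \<le> n \<longrightarrow> f m \<le> f n)"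

definition inF :: "(nat \<Rightarrow> real) \<Rightarrow> bool" where
  "inF f \<longleftrightarrow> (\<exists>Q. inF_on Q f)"

definition preceq :: "(nat \<Rightarrow> real) \<Rightarrow> (nat \<Rightarrow> real) \<Rightarrow> bool" (infix "\<preceq>\<^sub>F" 50) where
  "g \<preceq>\<^sub>F f \<longleftrightarrow> (\<exists>N K M :: nat. K > 0 \<and> M > 0 \<and> (\<forall>n\<ge>N. g n \<le> real K * f (M * n)))"

definition in_B :: "'a set \<Rightarrow> 'a letter list set \<Rightarrow> (nat \<Rightarrow> real) \<Rightarrow> bool" where
  "in_B A R f \<longleftrightarrow> (\<exists>L \<psi>. cayley_automatic A R L \<psi> \<and> ca_function A R L \<psi> \<preceq>\<^sub>F f)"

end

theory Submission
  imports Defs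
begin


lemma inv_letter_inv[simp]: "inv_letter (inv_letter x) = x"
  by (cases x) auto

lemma inv_word_inv[simp]: "inv_word (inv_word w) = w"
  by (simp add: inv_word_def rev_map comp_def)

lemma inv_word_append[simp]: "inv_word (u @ v) = inv_word v @ inv_word u"
  by (simp add: inv_word_def)

lemma inv_word_Nil[simp]: "inv_word [] = []" by (simp add: inv_word_def)
lemma inv_word_Cons[simp]: "inv_word (x # u) = inv_word u @ [inv_letter x]" by (simp add: inv_word_def)
lemma length_inv_word[simp]: "length (inv_word u) = length u" by (simp add: inv_word_def)

lemma inv_letter_gens: "x \<in> gens A \<Longrightarrow> inv_letter x \<in> gens A"
  by (cases x) (auto simp: gens_def)

lemma inv_word_lists: "u \<in> lists (gens A) \<Longrightarrow> inv_word u \<in> lists (gens A)"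
  by (force simp: inv_word_def gens_def)

lemma free_eq_refl[simp]: "free_eq u u" by (simp add: free_eq_def)

lemma free_eq_sym: "free_eq u v \<Longrightarrow> free_eq v u"
proof -
  have "sym ((free_red1 \<union> free_red1\<inverse>)\<^sup>*)"
    by (intro sym_rtrancl) (auto simp: sym_def)
  then show "free_eq u v \<Longrightarrow> free_eq v u" by (auto simp: free_eq_def sym_def)
qed

lemma free_eq_trans[trans]: "free_eq u v \<Longrightarrow> free_eq v w \<Longrightarrow> free_eq u w"
  unfolding free_eq_def by (rule rtrancl_trans)

lemma free_eq_cancel: "free_eq (u @ [x, inv_letter x] @ v) (u @ v)"
  unfolding free_eq_def free_red1_def by (rule r_into_rtrancl) blast

lemma free_step_ctx:
  assumes "(a, b) \<in> free_red1 \<union> free_red1\<inverse>"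
  shows "(p @ a @ s, p @ b @ s) \<in> free_red1 \<union> free_red1\<inverse>"
  using assms
proof
  assume "(a, b) \<in> free_red1"
  then obtain u x v where "a = u @ [x, inv_letter x] @ v" "b = u @ v" by (auto simp: free_red1_def)
  then have "(p @ a @ s, p @ b @ s) \<in> free_red1"
    unfolding free_red1_def by (rule_tac CollectI, rule_tac x="p @ u" in exI, auto)
  then show ?thesis by blast
next
  assume "(a, b) \<in> free_red1\<inverse>"
  then obtain u x v where "b = u @ [x, inv_letter x] @ v" "a = u @ v" by (auto simp: free_red1_def)
  then have "(p @ b @ s, p @ a @ s) \<in> free_red1"
    unfolding free_red1_def by (rule_tac CollectI, rule_tac x="p @ u" in exI, auto)
  then show ?thesis by blast
qed

lemma free_eq_ctx: "free_eq a b \<Longrightarrow> free_eq (p @ a @ s) (p @ b @ s)"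
  unfolding free_eq_def
proof (induction rule: rtrancl_induct)
  case base then show ?case by simp
next
  case (step y z) then show ?case
    by (meson free_step_ctx rtrancl.simps)
qed

lemma free_eq_app: "free_eq a b \<Longrightarrow> free_eq c d \<Longrightarrow> free_eq (a @ c) (b @ d)"
  using free_eq_ctx[of a b "[]" c] free_eq_ctx[of c d b "[]"]
  by (auto intro: free_eq_trans)

lemma free_eq_inv_cancel: "free_eq (u @ inv_word u) []"
proof (induction u)
  case Nil then show ?case by simp
next
  case (Cons x u)
  have "free_eq ((x # u) @ inv_word (x # u)) ([x] @ (u @ inv_word u) @ [inv_letter x])" by simp
  also have "free_eq \<dots> ([x] @ [] @ [inv_letter x])" using free_eq_ctx[OF Cons] .
  also have "free_eq \<dots> []" using free_eq_cancel[of "[]" x "[]"] by simp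
  finally show ?case .
qed

lemma free_eq_inv_cancel2: "free_eq (inv_word u @ u) []"
  using free_eq_inv_cancel[of "inv_word u"] by simp

lemma free_eq_inv: "free_eq a b \<Longrightarrow> free_eq (inv_word a) (inv_word b)"
  unfolding free_eq_def
proof (induction rule: rtrancl_induct)
  case base then show ?case by simp
next
  case (step y z)
  have "(inv_word y, inv_word z) \<in> free_red1 \<union> free_red1\<inverse>"
    using step(2)
  proof
    assume "(y, z) \<in> free_red1"
    then obtain u x v where "y = u @ [x, inv_letter x] @ v" "z = u @ v" by (auto simp: free_red1_def)
    then show ?thesis unfolding free_red1_def
      by (intro UnI1 CollectI exI[of _ "inv_word v"] exI[of _ "x"] exI[of _ "inv_word u"]) auto
  next
    assume "(y, z) \<in> free_red1\<inverse>"
    then obtain u x v where "z = u @ [x, inv_letter x] @ v" "y = u @ v" by (auto simp: free_red1_def)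
    then show ?thesis unfolding free_red1_def
      by (intro UnI2 converseI CollectI exI[of _ "inv_word v"] exI[of _ "x"] exI[of _ "inv_word u"]) auto
  qed
  then show ?case using step(3) by (meson rtrancl.simps)
qed

lemma free_cancel_mid: "free_eq (a @ b @ inv_word b @ c) (a @ c)"
  using free_eq_ctx[OF free_eq_inv_cancel[of b], of a c] by simp

lemma free_cancel_mid2: "free_eq (a @ inv_word b @ b @ c) (a @ c)"
  using free_eq_ctx[OF free_eq_inv_cancel2[of b], of a c] by simp

definition has_area :: "'a set \<Rightarrow> 'a letter list set \<Rightarrow> nat \<Rightarrow> 'a letter list \<Rightarrow> bool" where
  "has_area A R k w \<longleftrightarrow> (\<exists>ts. length ts \<le> k \<and> valid_conjs A R ts \<and> free_eq w (conj_prod ts))"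

lemma conj_prod_append[simp]: "conj_prod (ts1 @ ts2) = conj_prod ts1 @ conj_prod ts2"
  by (simp add: conj_prod_def)

lemma conj_prod_Nil[simp]: "conj_prod [] = []" by (simp add: conj_prod_def)
lemma conj_prod_Cons: "conj_prod ((v, r, e) # ts) = (v @ (if e then r else inv_word r) @ inv_word v) @ conj_prod ts"
  by (simp add: conj_prod_def)

lemma valid_conjs_alt: "valid_conjs A R ts \<longleftrightarrow> (\<forall>v r e. (v, r, e) \<in> set ts \<longrightarrow> v \<in> lists (gens A) \<and> r \<in> R)"
  unfolding valid_conjs_def by fastforce

lemma valid_conjs_append[simp]: "valid_conjs A R (ts1 @ ts2) \<longleftrightarrow> valid_conjs A R ts1 \<and> valid_conjs A R ts2"
  unfolding valid_conjs_alt set_append Un_iff by blast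

lemma ha_free: "has_area A R k w \<Longrightarrow> free_eq w w' \<Longrightarrow> has_area A R k w'"
  unfolding has_area_def by (meson free_eq_sym free_eq_trans)

lemma ha_mono: "has_area A R k w \<Longrightarrow> k \<le> k' \<Longrightarrow> has_area A R k' w"
  unfolding has_area_def by (meson order_trans)

lemma ha_nil: "has_area A R 0 []"
  unfolding has_area_def by (rule exI[of _ "[]"]) (simp add: valid_conjs_def)

lemma ha_app: "has_area A R k1 a \<Longrightarrow> has_area A R k2 b \<Longrightarrow> has_area A R (k1 + k2) (a @ b)"
  unfolding has_area_def
proof (elim exE conjE)
  fix ts1 ts2 assume "length ts1 \<le> k1" "valid_conjs A R ts1" "free_eq a (conj_prod ts1)"
    "length ts2 \<le> k2" "valid_conjs A R ts2" "free_eq b (conj_prod ts2)"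
  then show "\<exists>ts. length ts \<le> k1 + k2 \<and> valid_conjs A R ts \<and> free_eq (a @ b) (conj_prod ts)"
    by (intro exI[of _ "ts1 @ ts2"]) (auto intro: free_eq_app)
qed

lemma inv_conj_prod: "inv_word (conj_prod ts) = conj_prod (rev (map (\<lambda>(v, r, e). (v, r, \<not> e)) ts))"
  by (induction ts) (auto simp: conj_prod_Cons)

lemma ha_inv: "has_area A R k a \<Longrightarrow> has_area A R k (inv_word a)"
  unfolding has_area_def
proof (elim exE conjE)
  fix ts assume "length ts \<le> k" "valid_conjs A R ts" "free_eq a (conj_prod ts)"
  then show "\<exists>ts. length ts \<le> k \<and> valid_conjs A R ts \<and> free_eq (inv_word a) (conj_prod ts)"
    by (intro exI[of _ "rev (map (\<lambda>(v, r, e). (v, r, \<not> e)) ts)"])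
       (auto simp: valid_conjs_alt inv_conj_prod[symmetric] intro: free_eq_inv)
qed

lemma conj_conj_prod:
  "free_eq (p @ conj_prod ts @ inv_word p) (conj_prod (map (\<lambda>(v, r, e). (p @ v, r, e)) ts))"
proof (induction ts)
  case Nil then show ?case using free_eq_inv_cancel[of p] by simp
next
  case (Cons t ts)
  obtain v r e where t: "t = (v, r, e)" by (cases t)
  let ?x = "if e then r else inv_word r"
  have "p @ conj_prod (t # ts) @ inv_word p = (p @ v @ ?x @ inv_word v) @ conj_prod ts @ inv_word p"
    by (simp add: t conj_prod_Cons)
  also have "free_eq \<dots> ((p @ v @ ?x @ inv_word v) @ inv_word p @ p @ conj_prod ts @ inv_word p)"
    using free_eq_sym[OF free_cancel_mid2[of "p @ v @ ?x @ inv_word v" p "conj_prod ts @ inv_word p"]]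
    by simp
  also have "free_eq \<dots> ((p @ v @ ?x @ inv_word v @ inv_word p) @ conj_prod (map (\<lambda>(v, r, e). (p @ v, r, e)) ts))"
    using free_eq_ctx[OF Cons, of "p @ v @ ?x @ inv_word v @ inv_word p" "[]"] by simp
  also have "\<dots> = conj_prod (map (\<lambda>(v, r, e). (p @ v, r, e)) (t # ts))"
    by (simp add: t conj_prod_Cons)
  finally show ?case .
qed

lemma ha_conj: "p \<in> lists (gens A) \<Longrightarrow> has_area A R k a \<Longrightarrow> has_area A R k (p @ a @ inv_word p)"
  unfolding has_area_def
proof (elim exE conjE)
  fix ts assume p: "p \<in> lists (gens A)" and "length ts \<le> k" "valid_conjs A R ts" "free_eq a (conj_prod ts)"
  then show "\<exists>ts. length ts \<le> k \<and> valid_conjs A R ts \<and> free_eq (p @ a @ inv_word p) (conj_prod ts)"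
  proof (intro exI[of _ "map (\<lambda>(v, r, e). (p @ v, r, e)) ts"] conjI)
    show "length (map (\<lambda>(v, r, e). (p @ v, r, e)) ts) \<le> k" using \<open>length ts \<le> k\<close> by simp
    show "valid_conjs A R (map (\<lambda>(v, r, e). (p @ v, r, e)) ts)"
      using \<open>valid_conjs A R ts\<close> p unfolding valid_conjs_alt by fastforce
    show "free_eq (p @ a @ inv_word p) (conj_prod (map (\<lambda>(v, r, e). (p @ v, r, e)) ts))"
      by (rule free_eq_trans[OF free_eq_ctx conj_conj_prod]) fact
  qed
qed

lemma trivial_iff: "trivial_word A R w \<longleftrightarrow> (\<exists>k. has_area A R k w)"
  unfolding trivial_word_def has_area_def by blast

lemma area_le: "has_area A R k w \<Longrightarrow> area A R w \<le> k"
  unfolding has_area_def area_def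
  by (elim exE conjE, rule order_trans[OF Least_le]) auto

lemma ha_area: "trivial_word A R w \<Longrightarrow> has_area A R (area A R w) w"
  unfolding trivial_word_def has_area_def area_def
  by (rule LeastI2_ex) auto



lemma triv_free: "trivial_word A R w \<Longrightarrow> free_eq w w' \<Longrightarrow> trivial_word A R w'"
  unfolding trivial_iff by (meson ha_free)
lemma triv_app: "trivial_word A R a \<Longrightarrow> trivial_word A R b \<Longrightarrow> trivial_word A R (a @ b)"
  unfolding trivial_iff by (meson ha_app)
lemma triv_inv: "trivial_word A R a \<Longrightarrow> trivial_word A R (inv_word a)"
  unfolding trivial_iff by (meson ha_inv)
lemma triv_conj: "p \<in> lists (gens A) \<Longrightarrow> trivial_word A R a \<Longrightarrow> trivial_word A R (p @ a @ inv_word p)"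
  unfolding trivial_iff by (meson ha_conj)
lemma triv_nil: "trivial_word A R []"
  unfolding trivial_iff by (meson ha_nil)

definition eqv :: "'a set \<Rightarrow> 'a letter list set \<Rightarrow> 'a letter list \<Rightarrow> 'a letter list \<Rightarrow> bool" where
  "eqv A R u v \<longleftrightarrow> trivial_word A R (u @ inv_word v)"

lemma free_eqv: "free_eq u v \<Longrightarrow> eqv A R u v"
proof -
  assume "free_eq u v"
  have "trivial_word A R (v @ inv_word v)"
    using triv_free[OF triv_nil free_eq_sym[OF free_eq_inv_cancel]] .
  moreover have "free_eq (v @ inv_word v) (u @ inv_word v)"
    using free_eq_ctx[OF free_eq_sym[OF \<open>free_eq u v\<close>], of "[]" "inv_word v"] by simp
  ultimately show ?thesis unfolding eqv_def by (rule triv_free)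
qed

lemma eqv_refl[simp]: "eqv A R u u" by (rule free_eqv) simp

lemma eqv_sym: "eqv A R u v \<Longrightarrow> eqv A R v u"
  unfolding eqv_def using triv_inv by fastforce

lemma eqv_trans: "eqv A R u v \<Longrightarrow> eqv A R v w \<Longrightarrow> eqv A R u w"
  unfolding eqv_def
proof -
  assume "trivial_word A R (u @ inv_word v)" "trivial_word A R (v @ inv_word w)"
  then have "trivial_word A R (u @ inv_word v @ v @ inv_word w)" using triv_app by fastforce
  then show "trivial_word A R (u @ inv_word w)"
    using triv_free free_cancel_mid2 by blast
qed

lemma eqv_app_right: "eqv A R u v \<Longrightarrow> eqv A R (u @ c) (v @ c)"
  unfolding eqv_def
  using triv_free[OF _ free_eq_sym[OF free_cancel_mid[of u c "inv_word v"]]] by simp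

lemma eqv_cancel_right: "eqv A R (u @ c) (v @ c) \<Longrightarrow> eqv A R u v"
  unfolding eqv_def
  using triv_free[OF _ free_cancel_mid[of u c "inv_word v"]] by simp

lemma eqv_app_left: "p \<in> lists (gens A) \<Longrightarrow> eqv A R u v \<Longrightarrow> eqv A R (p @ u) (p @ v)"
  unfolding eqv_def using triv_conj[of p A R "u @ inv_word v"] by simp

lemma mem_elem: "v \<in> elem A R u \<longleftrightarrow> v \<in> lists (gens A) \<and> eqv A R u v"
  by (simp add: elem_def eqv_def)

lemma elem_eq_iff: "u \<in> lists (gens A) \<Longrightarrow> v \<in> lists (gens A) \<Longrightarrow> elem A R u = elem A R v \<longleftrightarrow> eqv A R u v"
proof
  assume "u \<in> lists (gens A)" "v \<in> lists (gens A)" "elem A R u = elem A R v"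
  then have "v \<in> elem A R u" by (simp add: mem_elem)
  then show "eqv A R u v" by (simp add: mem_elem)
next
  assume "eqv A R u v"
  then show "elem A R u = elem A R v"
    unfolding mem_elem[symmetric] set_eq_iff using eqv_sym eqv_trans by (meson mem_elem)
qed

lemma elem_self: "u \<in> lists (gens A) \<Longrightarrow> u \<in> elem A R u" by (simp add: mem_elem)

definition dehnN :: "'a set \<Rightarrow> 'a letter list set \<Rightarrow> nat \<Rightarrow> nat" where
  "dehnN A R n = Max {area A R w | w. w \<in> lists (gens A) \<and> length w \<le> n \<and> trivial_word A R w}"

lemma dehn_dehnN: "dehn A R n = real (dehnN A R n)"
  by (simp add: dehn_def dehnN_def)

lemma finite_words: "finite A \<Longrightarrow> finite {w. w \<in> lists (gens A) \<and> length w \<le> n}"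
proof -
  assume "finite A"
  then have "finite (gens A)" by (simp add: gens_def)
  then have "finite {xs. set xs \<subseteq> gens A \<and> length xs \<le> n}" by (rule finite_lists_length_le)
  then show ?thesis by (simp add: lists_eq_set)
qed

lemma area_le_dehnN:
  assumes "finite A" "w \<in> lists (gens A)" "length w \<le> n" "trivial_word A R w"
  shows "area A R w \<le> dehnN A R n"
  unfolding dehnN_def
proof (rule Max_ge)
  have "{area A R w | w. w \<in> lists (gens A) \<and> length w \<le> n \<and> trivial_word A R w}
        \<subseteq> area A R ` {w. w \<in> lists (gens A) \<and> length w \<le> n}" by blast
  then show "finite {area A R w | w. w \<in> lists (gens A) \<and> length w \<le> n \<and> trivial_word A R w}"
    using finite_words[OF assms(1)] finite_subset by blast
qed (use assms in blast)

lemma ha_dehnN: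
  assumes "finite A" "w \<in> lists (gens A)" "length w \<le> n" "trivial_word A R w"
  shows "has_area A R (dehnN A R n) w"
  using ha_mono[OF ha_area[OF assms(4)] area_le_dehnN[OF assms]] .

lemma dehnN_mono:
  assumes "finite A" "m \<le> n"
  shows "dehnN A R m \<le> dehnN A R n"
proof -
  have "dehnN A R m \<in> {area A R w | w. w \<in> lists (gens A) \<and> length w \<le> m \<and> trivial_word A R w}"
    unfolding dehnN_def
  proof (rule Max_in)
    have "{area A R w | w. w \<in> lists (gens A) \<and> length w \<le> m \<and> trivial_word A R w}
          \<subseteq> area A R ` {w. w \<in> lists (gens A) \<and> length w \<le> m}" by blast
    then show "finite {area A R w | w. w \<in> lists (gens A) \<and> length w \<le> m \<and> trivial_word A R w}"
      using finite_words[OF assms(1)] finite_subset by blast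
    show "{area A R w | w. w \<in> lists (gens A) \<and> length w \<le> m \<and> trivial_word A R w} \<noteq> {}"
    proof -
      have "area A R [] \<in> {area A R w | w. w \<in> lists (gens A) \<and> length w \<le> m \<and> trivial_word A R w}"
        using triv_nil[of A R] by auto
      then show ?thesis by blast
    qed
  qed
  then obtain w where "w \<in> lists (gens A)" "length w \<le> m" "trivial_word A R w" "dehnN A R m = area A R w"
    by blast
  then show ?thesis using area_le_dehnN[OF assms(1), of w n R] assms(2) by simp
qed



lemma regular_completion:
  assumes "regular_lang L"
  shows "\<exists>S. \<forall>p z. p @ z \<in> L \<longrightarrow> (\<exists>z'. length z' \<le> S \<and> p @ z' \<in> L)"
proof -
  obtain \<delta> :: "nat \<Rightarrow> 'a \<Rightarrow> nat" and q0 Fin where fin: "finite (range (foldl \<delta> q0))"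
    and L: "L = {w. foldl \<delta> q0 w \<in> Fin}"
    using assms unfolding regular_lang_def by blast
  define St where "St = range (foldl \<delta> q0)"
  define S where "S = card St"
  have main: "\<forall>z. length z = n \<longrightarrow> p @ z \<in> L \<longrightarrow> (\<exists>z'. length z' \<le> S \<and> p @ z' \<in> L)" for n p
  proof (induction n rule: less_induct)
    case (less n)
    show ?case
    proof (intro allI impI)
      fix z assume lz: "length z = n" and pz: "p @ z \<in> L"
      show "\<exists>z'. length z' \<le> S \<and> p @ z' \<in> L"
      proof (cases "n \<le> S")
        case True then show ?thesis using lz pz by blast
      next
        case False
        define f where "f j = foldl \<delta> q0 (p @ take j z)" for j
        have "\<not> inj_on f {0..S}"
        proof
          assume "inj_on f {0..S}"
          moreover have "f ` {0..S} \<subseteq> St" unfolding f_def St_def by (intro image_subsetI rangeI)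
          ultimately have "card {0..S} \<le> card St" using card_inj_on_le fin St_def by blast
          then show False by (simp add: S_def)
        qed
        then obtain j k where jk: "j \<in> {0..S}" "k \<in> {0..S}" "f j = f k" "j \<noteq> k"
          unfolding inj_on_def by blast
        obtain j' k' where jk': "j' < k'" "k' \<le> S" "f j' = f k'"
        proof (cases "j < k")
          case True then show ?thesis using that jk by auto
        next
          case False then have "k < j" using jk(4) by linarith
          then show ?thesis using that jk by auto
        qed
        define z' where "z' = take j' z @ drop k' z"
        have "foldl \<delta> q0 (p @ z') = foldl \<delta> (f j') (drop k' z)"
          by (simp add: z'_def f_def)
        also have "\<dots> = foldl \<delta> (f k') (drop k' z)" using jk' by simp
        also have "\<dots> = foldl \<delta> q0 (p @ take k' z @ drop k' z)" unfolding f_def by (simp only: foldl_append append_assoc)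
        also have "\<dots> = foldl \<delta> q0 (p @ z)" by (simp only: append_take_drop_id)
        finally have "p @ z' \<in> L" using pz L by simp
        moreover have "length z' < n" using jk' False lz by (simp add: z'_def)
        ultimately show ?thesis using less by blast
      qed
    qed
  qed
  show ?thesis using main by blast
qed


lemma length_conv[simp]: "length (conv u v) = max (length u) (length v)"
  by (simp add: conv_def)

lemma nth_conv: "i < max (length u) (length v) \<Longrightarrow> conv u v ! i = (nth_opt u i, nth_opt v i)"
  by (simp add: conv_def)

lemma conv_take_eq:
  assumes "take t (conv u v) = take t (conv u' v')" "t \<le> length (conv u v)" "i < t"
  shows "nth_opt u i = nth_opt u' i \<and> nth_opt v i = nth_opt v' i"
proof -
  have "length (take t (conv u' v')) = length (take t (conv u v))" using assms(1) by simp
  also have "\<dots> = t" using assms(2) by (simp only: length_take)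
  finally have t': "t \<le> length (conv u' v')" by simp
  have "conv u v ! i = take t (conv u v) ! i" using assms(3) by simp
  also have "\<dots> = take t (conv u' v') ! i" using assms(1) by simp
  also have "\<dots> = conv u' v' ! i" using assms(3) by simp
  finally have "conv u v ! i = conv u' v' ! i" .
  then show ?thesis using assms(2,3) t' by (simp add: nth_conv)
qed

lemma take_eq_nth_opt:
  assumes "\<forall>i<t. nth_opt a i = nth_opt b i"
  shows "take t a = take t b"
proof -
  have len: "min t (length a) = min t (length b)"
  proof (rule ccontr)
    assume "min t (length a) \<noteq> min t (length b)"
    then have "(length a < t \<and> length a < length b) \<or> (length b < t \<and> length b < length a)" by linarith
    then show False
    proof
      assume "length a < t \<and> length a < length b"
      then have "nth_opt a (length a) = nth_opt b (length a)" using assms by blast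
      then show False using \<open>length a < t \<and> length a < length b\<close> by (simp add: nth_opt_def)
    next
      assume "length b < t \<and> length b < length a"
      then have "nth_opt a (length b) = nth_opt b (length b)" using assms by blast
      then show False using \<open>length b < t \<and> length b < length a\<close> by (simp add: nth_opt_def)
    qed
  qed
  show ?thesis
  proof (rule nth_equalityI)
    show "length (take t a) = length (take t b)" using len by simp
    fix i assume "i < length (take t a)"
    then have "i < t" "i < length a" "i < length b" using len by auto
    then have "nth_opt a i = nth_opt b i" using assms by blast
    then show "take t a ! i = take t b ! i" using \<open>i < t\<close> \<open>i < length a\<close> \<open>i < length b\<close>
      by (simp add: nth_opt_def)
  qed
qed



lemma triv_cancel_left: "trivial_word A R X \<Longrightarrow> trivial_word A R (X @ W) \<Longrightarrow> trivial_word A R W"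
proof -
  assume "trivial_word A R X" "trivial_word A R (X @ W)"
  then have "trivial_word A R (inv_word X @ X @ W)" using triv_app triv_inv by fastforce
  then show ?thesis using triv_free free_cancel_mid2[of "[]" X W] by simp
qed

lemma triv_unconj: "p \<in> lists (gens A) \<Longrightarrow> trivial_word A R (p @ c @ inv_word p) \<Longrightarrow> trivial_word A R c"
proof -
  assume p: "p \<in> lists (gens A)" and t: "trivial_word A R (p @ c @ inv_word p)"
  have "trivial_word A R (inv_word p @ (p @ c @ inv_word p) @ inv_word (inv_word p))"
    by (rule triv_conj[OF inv_word_lists[OF p] t])
  then have "trivial_word A R (inv_word p @ p @ (c @ inv_word p @ p @ []))" by simp
  then have "trivial_word A R (c @ inv_word p @ p @ [])" using triv_free free_cancel_mid2[of "[]" p] by fastforce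
  then show ?thesis using triv_free free_cancel_mid2[of c p "[]"] by fastforce
qed

lemma ha_of_triv:
  assumes "finite A" "trivial_word A R c" "c \<in> lists (gens A)" "length c \<le> m"
  shows "has_area A R (dehnN A R m) c"
  using ha_dehnN[OF assms(1,3,4,2)] .

locale CA =
  fixes A :: "'a set" and R :: "'a letter list set" and L :: "'a letter list set"
    and \<psi> :: "'a letter list \<Rightarrow> 'a letter list set"
  assumes finA: "finite A" and ca: "cayley_automatic A R L \<psi>"
begin

lemma L_lists: "L \<subseteq> lists (gens A)" and regL: "regular_lang L" and bij: "bij_betw \<psi> L (grp A R)"
  using ca by (auto simp: cayley_automatic_def)

definition Rel :: "'a \<Rightarrow> ('a letter list \<times> 'a letter list) set" where
  "Rel a = {(u, v). u \<in> L \<and> v \<in> L \<and> (\<exists>x \<in> \<psi> u. \<psi> v = elem A R (x @ [(a, True)]))}"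

lemma regRel: "a \<in> A \<Longrightarrow> regular_lang ((\<lambda>(u, v). conv u v) ` Rel a)"
  using ca unfolding cayley_automatic_def fa_recognizable_def Rel_def by blast

definition hN :: "nat \<Rightarrow> nat" where
  "hN n = Max (insert 0 {word_dist A R (elem A R w) (\<psi> w) | w. w \<in> L \<and> length w \<le> n})"

lemma hN_finite: "finite {word_dist A R (elem A R w) (\<psi> w) | w. w \<in> L \<and> length w \<le> n}"
proof -
  have "{word_dist A R (elem A R w) (\<psi> w) | w. w \<in> L \<and> length w \<le> n}
        \<subseteq> (\<lambda>w. word_dist A R (elem A R w) (\<psi> w)) ` {w. w \<in> lists (gens A) \<and> length w \<le> n}"
    using L_lists by blast
  then show ?thesis using finite_words[OF finA] finite_subset by blast
qed

lemma ca_function_hN: "ca_function A R L \<psi> n = real (hN n)"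
  by (simp add: ca_function_def hN_def)

lemma hN_mono: "m \<le> n \<Longrightarrow> hN m \<le> hN n"
  unfolding hN_def
  by (rule Max_mono) (use hN_finite in auto)

lemma word_dist_le_hN: "w \<in> L \<Longrightarrow> length w \<le> n \<Longrightarrow> word_dist A R (elem A R w) (\<psi> w) \<le> hN n"
  unfolding hN_def by (rule Max_ge) (use hN_finite in auto)

lemma psi_grp: "u \<in> L \<Longrightarrow> \<exists>y \<in> lists (gens A). \<psi> u = elem A R y"
  using bij unfolding bij_betw_def grp_def by blast

lemma elem_mem_eq: "y \<in> lists (gens A) \<Longrightarrow> x \<in> elem A R y \<Longrightarrow> elem A R x = elem A R y"
  by (metis elem_eq_iff eqv_sym mem_elem)

lemma psi_mem: "u \<in> L \<Longrightarrow> x \<in> \<psi> u \<Longrightarrow> x \<in> lists (gens A) \<and> \<psi> u = elem A R x"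
  using psi_grp elem_mem_eq mem_elem by metis

lemma E_exists:
  assumes "w \<in> L"
  shows "\<exists>e. e \<in> lists (gens A) \<and> length e \<le> hN (length w) \<and> elem A R (w @ e) = \<psi> w"
proof -
  have wl: "w \<in> lists (gens A)" using assms L_lists by blast
  obtain y where y: "y \<in> lists (gens A)" "\<psi> w = elem A R y" using psi_grp assms by blast
  let ?P = "\<lambda>k. \<exists>x \<in> lists (gens A). length x = k \<and> (\<exists>y' \<in> elem A R w. elem A R (y' @ x) = \<psi> w)"
  have wm: "w \<in> elem A R w" using elem_self[OF wl] by blast
  have "eqv A R (w @ inv_word w @ y) y"
    by (rule free_eqv) (use free_cancel_mid[of "[]" w y] in simp)
  then have e1: "elem A R (w @ inv_word w @ y) = \<psi> w"
    using y wl by (simp add: elem_eq_iff inv_word_lists)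
  have l1: "inv_word w @ y \<in> lists (gens A)" using wl y by (simp add: inv_word_lists)
  have "?P (length (inv_word w @ y))" using wm e1 l1 by blast
  then have "?P (LEAST k. ?P k)" by (rule LeastI)
  then obtain x y' where x: "x \<in> lists (gens A)" "length x = word_dist A R (elem A R w) (\<psi> w)"
    "y' \<in> elem A R w" "elem A R (y' @ x) = \<psi> w"
    unfolding word_dist_def by blast
  have "eqv A R w y'" using x(3) by (simp add: mem_elem)
  then have "eqv A R (w @ x) (y' @ x)" by (rule eqv_app_right)
  then have "elem A R (w @ x) = \<psi> w"
  proof -
    have "y' \<in> lists (gens A)" using x(3) by (simp add: mem_elem)
    then have "elem A R (w @ x) = elem A R (y' @ x)"
      using \<open>eqv A R (w @ x) (y' @ x)\<close> x(1) wl by (simp add: elem_eq_iff)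
    then show ?thesis using x(4) by simp
  qed
  moreover have "length x \<le> hN (length w)" using x(2) word_dist_le_hN[OF assms le_refl] by simp
  ultimately show ?thesis using x(1) by blast
qed

definition E :: "'a letter list \<Rightarrow> 'a letter list" where
  "E w = (SOME e. e \<in> lists (gens A) \<and> length e \<le> hN (length w) \<and> elem A R (w @ e) = \<psi> w)"

lemma E: "w \<in> L \<Longrightarrow> E w \<in> lists (gens A) \<and> length (E w) \<le> hN (length w) \<and> elem A R (w @ E w) = \<psi> w"
  unfolding E_def by (rule someI_ex) (rule E_exists)

lemma Rel_D:
  assumes "(u, v) \<in> Rel a"
  shows "u \<in> L \<and> v \<in> L \<and> (\<exists>x \<in> lists (gens A). \<psi> u = elem A R x \<and> \<psi> v = elem A R (x @ [(a, True)]))"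
  using assms psi_mem unfolding Rel_def by blast

lemma aT: "a \<in> A \<Longrightarrow> [(a, b)] \<in> lists (gens A)" by (simp add: gens_def)

lemma Rel_fun:
  assumes "a \<in> A" "(u, v) \<in> Rel a" "(u, v') \<in> Rel a"
  shows "v = v'"
proof -
  obtain x where x: "x \<in> lists (gens A)" "\<psi> u = elem A R x" "\<psi> v = elem A R (x @ [(a, True)])" "v \<in> L"
    using Rel_D[OF assms(2)] by blast
  obtain x' where x': "x' \<in> lists (gens A)" "\<psi> u = elem A R x'" "\<psi> v' = elem A R (x' @ [(a, True)])" "v' \<in> L"
    using Rel_D[OF assms(3)] by blast
  have "eqv A R x x'" using x x' elem_eq_iff by metis
  then have "eqv A R (x @ [(a, True)]) (x' @ [(a, True)])" by (rule eqv_app_right)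
  then have "\<psi> v = \<psi> v'" using x x' aT[OF assms(1)] by (simp add: elem_eq_iff)
  then show ?thesis using bij x(4) x'(4) unfolding bij_betw_def inj_on_def by blast
qed

lemma Rel_fun2:
  assumes "a \<in> A" "(u, v) \<in> Rel a" "(u', v) \<in> Rel a"
  shows "u = u'"
proof -
  obtain x where x: "x \<in> lists (gens A)" "\<psi> u = elem A R x" "\<psi> v = elem A R (x @ [(a, True)])" "u \<in> L"
    using Rel_D[OF assms(2)] by blast
  obtain x' where x': "x' \<in> lists (gens A)" "\<psi> u' = elem A R x'" "\<psi> v = elem A R (x' @ [(a, True)])" "u' \<in> L"
    using Rel_D[OF assms(3)] by blast
  have "eqv A R (x @ [(a, True)]) (x' @ [(a, True)])" using x x' aT[OF assms(1)] elem_eq_iff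
    by (metis Cons_in_lists_iff append_in_lists_conv)
  then have "eqv A R x x'" by (rule eqv_cancel_right)
  then have "\<psi> u = \<psi> u'" using x x' by (simp add: elem_eq_iff)
  then show ?thesis using bij x(4) x'(4) unfolding bij_betw_def inj_on_def by blast
qed

end


context CA begin

lemma S_exists: "\<exists>S. \<forall>a\<in>A. \<forall>p z. p @ z \<in> (\<lambda>(u, v). conv u v) ` Rel a \<longrightarrow>
   (\<exists>z'. length z' \<le> S \<and> p @ z' \<in> (\<lambda>(u, v). conv u v) ` Rel a)"
proof -
  have "\<forall>a\<in>A. \<exists>S. \<forall>p z. p @ z \<in> (\<lambda>(u, v). conv u v) ` Rel a \<longrightarrow>
     (\<exists>z'. length z' \<le> S \<and> p @ z' \<in> (\<lambda>(u, v). conv u v) ` Rel a)"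
    using regular_completion[OF regRel] by blast
  then obtain f where f: "\<forall>a\<in>A. \<forall>p z. p @ z \<in> (\<lambda>(u, v). conv u v) ` Rel a \<longrightarrow>
     (\<exists>z'. length z' \<le> f a \<and> p @ z' \<in> (\<lambda>(u, v). conv u v) ` Rel a)"
    using bchoice by metis
  have "\<forall>a\<in>A. f a \<le> sum f A" using member_le_sum[OF _ _ finA] by blast
  then show ?thesis using f by (meson order_trans)
qed

definition SS :: nat where
  "SS = (SOME S. \<forall>a\<in>A. \<forall>p z. p @ z \<in> (\<lambda>(u, v). conv u v) ` Rel a \<longrightarrow>
   (\<exists>z'. length z' \<le> S \<and> p @ z' \<in> (\<lambda>(u, v). conv u v) ` Rel a))"

lemma SS: "a \<in> A \<Longrightarrow> p @ z \<in> (\<lambda>(u, v). conv u v) ` Rel a \<Longrightarrow>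
   \<exists>z'. length z' \<le> SS \<and> p @ z' \<in> (\<lambda>(u, v). conv u v) ` Rel a"
  using someI_ex[OF S_exists] unfolding SS_def by blast

lemma complete_rel:
  assumes "a \<in> A" "(u, v) \<in> Rel a" "t \<le> max (length u) (length v)"
  shows "\<exists>u' v'. (u', v') \<in> Rel a \<and> (\<forall>i<t. nth_opt u i = nth_opt u' i \<and> nth_opt v i = nth_opt v' i)
           \<and> max (length u') (length v') \<le> t + SS"
proof -
  let ?P = "take t (conv u v)"
  have "?P @ drop t (conv u v) \<in> (\<lambda>(u, v). conv u v) ` Rel a" using assms(2) by force
  then obtain z' where z': "length z' \<le> SS" "?P @ z' \<in> (\<lambda>(u, v). conv u v) ` Rel a"
    using SS[OF assms(1)] by blast
  then obtain u' v' where uv': "(u', v') \<in> Rel a" "?P @ z' = conv u' v'" by auto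
  have lP: "length ?P = t" using assms(3) by simp
  have "take t (conv u' v') = ?P" using uv'(2)[symmetric] lP by simp
  then have "\<forall>i<t. nth_opt u i = nth_opt u' i \<and> nth_opt v i = nth_opt v' i"
    using conv_take_eq[of t u v u' v'] assms(3) by simp
  moreover have "max (length u') (length v') \<le> t + SS"
  proof -
    have "max (length u') (length v') = t + length z'" using arg_cong[OF uv'(2), of length] lP by simp
    then show ?thesis using z'(1) by linarith
  qed
  ultimately show ?thesis using uv'(1) by blast
qed

lemma Rel_len1:
  assumes "a \<in> A" "(u, v) \<in> Rel a"
  shows "length v \<le> length u + SS + 1"
proof (rule ccontr)
  assume nt: "\<not> ?thesis"
  then have lt: "length u + 1 \<le> max (length u) (length v)" by simp
  obtain u' v' where uv': "(u', v') \<in> Rel a" "\<forall>i<length u + 1. nth_opt u i = nth_opt u' i \<and> nth_opt v i = nth_opt v' i"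
    "max (length u') (length v') \<le> length u + 1 + SS"
    using complete_rel[OF assms lt] by blast
  have "nth_opt u' (length u) = nth_opt u (length u)" using uv'(2) by simp
  then have "nth_opt u' (length u) = None" by (simp add: nth_opt_def)
  then have "length u' \<le> length u" by (simp add: nth_opt_def split: if_splits)
  moreover have "take (length u + 1) u = take (length u + 1) u'"
    using uv'(2) take_eq_nth_opt by blast
  ultimately have "u' = u" by simp
  then have "v' = v" using Rel_fun[OF assms(1) assms(2)] uv'(1) by simp
  then show False using uv'(3) nt by simp
qed

lemma Rel_len2:
  assumes "a \<in> A" "(u, v) \<in> Rel a"
  shows "length u \<le> length v + SS + 1"
proof (rule ccontr)
  assume nt: "\<not> ?thesis"
  then have lt: "length v + 1 \<le> max (length u) (length v)" by simp
  obtain u' v' where uv': "(u', v') \<in> Rel a" "\<forall>i<length v + 1. nth_opt u i = nth_opt u' i \<and> nth_opt v i = nth_opt v' i"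
    "max (length u') (length v') \<le> length v + 1 + SS"
    using complete_rel[OF assms lt] by blast
  have "nth_opt v' (length v) = nth_opt v (length v)" using uv'(2) by simp
  then have "nth_opt v' (length v) = None" by (simp add: nth_opt_def)
  then have "length v' \<le> length v" by (simp add: nth_opt_def split: if_splits)
  moreover have "take (length v + 1) v = take (length v + 1) v'"
    using uv'(2) take_eq_nth_opt by blast
  ultimately have "v' = v" by simp
  then have "u' = u" using Rel_fun2[OF assms(1) assms(2)] uv'(1) by simp
  then show False using uv'(3) nt by simp
qed


lemma rung:
  assumes "a \<in> A" "(u, v) \<in> Rel a"
  shows "\<exists>x\<in>lists (gens A). length x \<le> 2 * SS + 1 + 2 * hN (max (length u) (length v) + SS)
           \<and> eqv A R (take t u @ x) (take t v)"
proof -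
  define m where "m = max (length u) (length v)"
  define t0 where "t0 = min t m"
  have tu: "take t u = take t0 u" and tv: "take t v = take t0 v"
    by (cases "t \<le> m"; simp add: t0_def m_def)+
  obtain u' v' where uv': "(u', v') \<in> Rel a" "\<forall>i<t0. nth_opt u i = nth_opt u' i \<and> nth_opt v i = nth_opt v' i"
    "max (length u') (length v') \<le> t0 + SS"
    using complete_rel[OF assms, of t0] by (auto simp: t0_def m_def)
  have tu': "take t0 u' = take t0 u" using uv'(2) take_eq_nth_opt by (metis (mono_tags, lifting))
  have tv': "take t0 v' = take t0 v" using uv'(2) take_eq_nth_opt by (metis (mono_tags, lifting))
  define du where "du = drop t0 u'"
  define dv where "dv = drop t0 v'"
  have u'eq: "u' = take t0 u @ du" using tu' du_def by (metis append_take_drop_id)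
  have v'eq: "v' = take t0 v @ dv" using tv' dv_def by (metis append_take_drop_id)
  have ldu: "length du \<le> SS" and ldv: "length dv \<le> SS" using uv'(3) by (auto simp: du_def dv_def)
  obtain y where y: "u' \<in> L" "v' \<in> L" "y \<in> lists (gens A)" "\<psi> u' = elem A R y"
     "\<psi> v' = elem A R (y @ [(a, True)])"
    using Rel_D[OF uv'(1)] by blast
  have u'l: "u' \<in> lists (gens A)" and v'l: "v' \<in> lists (gens A)" using y L_lists by auto
  define e1 where "e1 = E u'"
  define e2 where "e2 = E v'"
  have e1: "e1 \<in> lists (gens A)" "length e1 \<le> hN (length u')" "elem A R (u' @ e1) = \<psi> u'"
    using E[OF y(1)] by (auto simp: e1_def)
  have e2: "e2 \<in> lists (gens A)" "length e2 \<le> hN (length v')" "elem A R (v' @ e2) = \<psi> v'"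
    using E[OF y(2)] by (auto simp: e2_def)
  have "eqv A R (u' @ e1) y" using e1 y u'l by (simp add: elem_eq_iff)
  then have "eqv A R (u' @ e1 @ [(a, True)]) (y @ [(a, True)])" using eqv_app_right by fastforce
  then have "elem A R (u' @ e1 @ [(a, True)]) = elem A R (v' @ e2)"
    using e1 e2 y u'l aT[OF assms(1)] by (simp add: elem_eq_iff)
  moreover have "u' @ e1 @ [(a, True)] \<in> lists (gens A)" "v' @ e2 \<in> lists (gens A)"
    using e1 e2 u'l v'l aT[OF assms(1)] by auto
  ultimately have eq1: "eqv A R (u' @ e1 @ [(a, True)]) (v' @ e2)"
    using elem_eq_iff by blast
  define x where "x = du @ e1 @ [(a, True)] @ inv_word e2 @ inv_word dv"
  have "eqv A R ((u' @ e1 @ [(a, True)]) @ (inv_word e2 @ inv_word dv)) ((v' @ e2) @ (inv_word e2 @ inv_word dv))"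
    using eqv_app_right[OF eq1] .
  moreover have "free_eq ((v' @ e2) @ (inv_word e2 @ inv_word dv)) (take t0 v)"
  proof -
    have "free_eq ((take t0 v @ dv) @ e2 @ inv_word e2 @ inv_word dv) ((take t0 v @ dv) @ inv_word dv)"
      using free_cancel_mid[of "take t0 v @ dv" e2 "inv_word dv"] by simp
    also have "free_eq \<dots> (take t0 v)"
      using free_cancel_mid[of "take t0 v" dv "[]"] by simp
    finally show ?thesis using v'eq by simp
  qed
  ultimately have "eqv A R (take t0 u @ x) (take t0 v)"
    using u'eq eqv_trans free_eqv by (fastforce simp: x_def)
  moreover have "x \<in> lists (gens A)"
  proof -
    have "du \<in> lists (gens A)" "dv \<in> lists (gens A)" using u'l v'l du_def dv_def
      by (metis append_in_lists_conv append_take_drop_id)+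
    then show ?thesis using e1 e2 aT[OF assms(1)] by (simp add: x_def inv_word_lists)
  qed
  moreover have "length x \<le> 2 * SS + 1 + 2 * hN (m + SS)"
  proof -
    have "length u' \<le> m + SS" "length v' \<le> m + SS" using uv'(3) t0_def by auto
    then have "hN (length u') \<le> hN (m + SS)" "hN (length v') \<le> hN (m + SS)" using hN_mono by auto
    then show ?thesis using ldu ldv e1(2) e2(2) by (simp add: x_def)
  qed
  ultimately show ?thesis using tu tv m_def by auto
qed

end


lemma ladder:
  assumes finA: "finite A" and ul: "u \<in> lists (gens A)" and vl: "v \<in> lists (gens A)" and x0: "x 0 = []"
    and xt: "\<And>t. x t \<in> lists (gens A) \<and> length (x t) \<le> B \<and> eqv A R (take t u @ x t) (take t v)"
  shows "has_area A R (t * dehnN A R (2 * B + 2)) (take t u @ x t @ inv_word (take t v))"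
proof (induction t)
  case 0 then show ?case using x0 ha_nil by simp
next
  case (Suc t)
  define P where "P = take t u"
  define Q where "Q = take t v"
  define \<alpha> where "\<alpha> = take 1 (drop t u)"
  define \<beta> where "\<beta> = take 1 (drop t v)"
  have Pa: "take (Suc t) u = P @ \<alpha>" using take_add[of t 1 u] by (simp add: P_def \<alpha>_def)
  have Qb: "take (Suc t) v = Q @ \<beta>" using take_add[of t 1 v] by (simp add: Q_def \<beta>_def)
  define c where "c = inv_word (x t) @ \<alpha> @ x (Suc t) @ inv_word \<beta>"
  define X where "X = P @ x t @ inv_word Q"
  define Y where "Y = take (Suc t) u @ x (Suc t) @ inv_word (take (Suc t) v)"
  have Yeq: "Y = P @ \<alpha> @ x (Suc t) @ inv_word \<beta> @ inv_word Q" by (simp add: Y_def Pa Qb)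
  have fe: "free_eq (X @ Q @ c @ inv_word Q) Y"
  proof -
    have "X @ Q @ c @ inv_word Q = (P @ x t) @ inv_word Q @ Q @ (inv_word (x t) @ \<alpha> @ x (Suc t) @ inv_word \<beta> @ inv_word Q)"
      by (simp add: X_def c_def)
    also have "free_eq \<dots> ((P @ x t) @ (inv_word (x t) @ \<alpha> @ x (Suc t) @ inv_word \<beta> @ inv_word Q))"
      by (rule free_cancel_mid2)
    also have "\<dots> = P @ x t @ inv_word (x t) @ (\<alpha> @ x (Suc t) @ inv_word \<beta> @ inv_word Q)" by simp
    also have "free_eq \<dots> (P @ (\<alpha> @ x (Suc t) @ inv_word \<beta> @ inv_word Q))"
      by (rule free_cancel_mid)
    finally show ?thesis using Yeq by simp
  qed
  have tX: "trivial_word A R X" using xt[of t] by (simp add: eqv_def X_def P_def Q_def)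
  have tY: "trivial_word A R Y" using xt[of "Suc t"] by (simp add: eqv_def Y_def)
  have Ql: "Q \<in> lists (gens A)" using vl by (simp add: Q_def in_lists_conv_set) (meson in_set_takeD)
  have "trivial_word A R (X @ Q @ c @ inv_word Q)" using triv_free[OF tY free_eq_sym[OF fe]] .
  then have "trivial_word A R (Q @ c @ inv_word Q)" using triv_cancel_left[OF tX] by simp
  then have tc: "trivial_word A R c" using triv_unconj[OF Ql] by blast
  have lists_take_drop: "\<And>w n k. w \<in> lists (gens A) \<Longrightarrow> take n (drop k w) \<in> lists (gens A)"
    by (simp add: in_lists_conv_set) (meson in_set_dropD in_set_takeD)
  have cl: "c \<in> lists (gens A)" unfolding c_def \<alpha>_def \<beta>_def
    using xt[of t] xt[of "Suc t"] lists_take_drop[OF ul] lists_take_drop[OF vl]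
    by (simp add: inv_word_lists)
  have "length c \<le> 2 * B + 2"
  proof -
    have "length (x t) \<le> B" "length (x (Suc t)) \<le> B" "length \<alpha> \<le> 1" "length \<beta> \<le> 1"
      using xt[of t] xt[of "Suc t"] by (auto simp: \<alpha>_def \<beta>_def)
    then show ?thesis by (simp add: c_def)
  qed
  then have "has_area A R (dehnN A R (2 * B + 2)) c" using ha_of_triv[OF finA tc cl] by blast
  then have "has_area A R (dehnN A R (2 * B + 2)) (Q @ c @ inv_word Q)" using ha_conj[OF Ql] by blast
  then have "has_area A R (t * dehnN A R (2 * B + 2) + dehnN A R (2 * B + 2)) (X @ Q @ c @ inv_word Q)"
    using ha_app Suc.IH X_def P_def Q_def by fastforce
  then have "has_area A R (Suc t * dehnN A R (2 * B + 2)) Y"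
    using ha_free[OF _ fe] by (simp add: add.commute)
  then show ?case by (simp add: Y_def)
qed



context CA begin

definition BB :: "nat \<Rightarrow> nat" where "BB T = 2 * SS + 1 + 2 * hN (T + SS)"

lemma adj:
  assumes "a \<in> A" "(u, v) \<in> Rel a" "max (length u) (length v) \<le> T"
  shows "\<exists>x\<in>lists (gens A). length x \<le> BB T \<and> has_area A R (T * dehnN A R (2 * BB T + 2)) (u @ x @ inv_word v)"
proof -
  have uv: "u \<in> L" "v \<in> L" using Rel_D[OF assms(2)] by auto
  then have ul: "u \<in> lists (gens A)" and vl: "v \<in> lists (gens A)" using L_lists by auto
  have ex: "\<exists>x. x \<in> lists (gens A) \<and> length x \<le> BB T \<and> eqv A R (take t u @ x) (take t v)" for t
  proof -
    obtain x where x: "x \<in> lists (gens A)" "length x \<le> 2 * SS + 1 + 2 * hN (max (length u) (length v) + SS)"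
      "eqv A R (take t u @ x) (take t v)" using rung[OF assms(1,2)] by blast
    have "hN (max (length u) (length v) + SS) \<le> hN (T + SS)" using hN_mono assms(3) by simp
    then show ?thesis using x by (intro exI[of _ x]) (auto simp: BB_def)
  qed
  define xf where "xf t = (if t = 0 then [] else (SOME x. x \<in> lists (gens A) \<and> length x \<le> BB T \<and> eqv A R (take t u @ x) (take t v)))" for t
  have xf: "xf t \<in> lists (gens A) \<and> length (xf t) \<le> BB T \<and> eqv A R (take t u @ xf t) (take t v)" for t
  proof (cases "t = 0")
    case True then show ?thesis by (simp add: xf_def)
  next
    case False then show ?thesis unfolding xf_def using someI_ex[OF ex[of t]] by simp
  qed
  have "has_area A R (T * dehnN A R (2 * BB T + 2)) (take T u @ xf T @ inv_word (take T v))"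
    by (rule ladder[OF finA ul vl _ xf]) (simp add: xf_def)
  then show ?thesis using xf[of T] assms(3) by auto
qed

lemma grp_elem: "w \<in> lists (gens A) \<Longrightarrow> elem A R w \<in> grp A R"
  by (simp add: grp_def)

definition rep :: "'a letter list \<Rightarrow> 'a letter list" where
  "rep w = the_inv_into L \<psi> (elem A R w)"

lemma rep: "w \<in> lists (gens A) \<Longrightarrow> rep w \<in> L \<and> \<psi> (rep w) = elem A R w"
proof -
  assume "w \<in> lists (gens A)"
  then have m: "elem A R w \<in> \<psi> ` L" using bij grp_elem unfolding bij_betw_def by blast
  have inj: "inj_on \<psi> L" using bij unfolding bij_betw_def by blast
  show ?thesis unfolding rep_def
    using the_inv_into_into[OF inj m subset_refl] f_the_inv_into_f[OF inj m] by blast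
qed

definition c0 :: nat where "c0 = length (rep [])"
definition TT :: "nat \<Rightarrow> nat" where "TT n = c0 + n * (SS + 1)"
definition Lc :: "nat \<Rightarrow> nat" where "Lc n = 4 * SS + 4 + 6 * hN (TT n + SS)"

lemma rel_step:
  assumes wl: "w \<in> lists (gens A)" and i: "i < length w" and l: "w ! i = (a, b)"
  shows "a \<in> A \<and> (if b then (rep (take i w), rep (take (Suc i) w)) \<in> Rel a
                      else (rep (take (Suc i) w), rep (take i w)) \<in> Rel a)"
proof -
  have tS: "take (Suc i) w = take i w @ [(a, b)]" using i l by (simp add: take_Suc_conv_app_nth)
  have til: "take i w \<in> lists (gens A)" and tSl: "take (Suc i) w \<in> lists (gens A)"
    using wl by (simp_all add: in_lists_conv_set) (meson in_set_takeD)+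
  have "(a, b) \<in> gens A" using wl i l by (metis in_listsD nth_mem)
  then have aA: "a \<in> A" by (simp add: gens_def)
  have r1: "rep (take i w) \<in> L" "\<psi> (rep (take i w)) = elem A R (take i w)" using rep[OF til] by auto
  have r2: "rep (take (Suc i) w) \<in> L" "\<psi> (rep (take (Suc i) w)) = elem A R (take (Suc i) w)" using rep[OF tSl] by auto
  show ?thesis
  proof (cases b)
    case True
    then have "(rep (take i w), rep (take (Suc i) w)) \<in> Rel a"
      unfolding Rel_def using r1 r2 tS elem_self[OF til] by auto
    then show ?thesis using aA True by simp
  next
    case False
    have "eqv A R (take i w @ [(a, False), (a, True)]) (take i w)"
      using free_eqv[OF free_eq_cancel[of "take i w" "(a, False)" "[]"]] by simp
    moreover have "take i w @ [(a, False), (a, True)] = take (Suc i) w @ [(a, True)]"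
      using tS False by simp
    moreover have "take (Suc i) w @ [(a, True)] \<in> lists (gens A)" using tSl aT[OF aA] by simp
    ultimately have "elem A R (take i w) = elem A R (take (Suc i) w @ [(a, True)])"
      using til elem_eq_iff eqv_sym by metis
    then have "(rep (take (Suc i) w), rep (take i w)) \<in> Rel a"
      unfolding Rel_def using r1 r2 elem_self[OF tSl] by auto
    then show ?thesis using aA False by simp
  qed
qed

lemma rep_len:
  assumes wl: "w \<in> lists (gens A)" and i: "i \<le> length w"
  shows "length (rep (take i w)) \<le> c0 + i * (SS + 1)"
  using i
proof (induction i)
  case 0 then show ?case by (simp add: c0_def)
next
  case (Suc i)
  then have i: "i < length w" by simp
  obtain a b where l: "w ! i = (a, b)" by (cases "w ! i")
  note rs = rel_step[OF wl i l]
  have "length (rep (take (Suc i) w)) \<le> length (rep (take i w)) + SS + 1"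
    using rs Rel_len1[of a] Rel_len2[of a] by (cases b) auto
  then show ?case using Suc by simp
qed

end


context CA begin

lemma fill:
  assumes wl: "w \<in> lists (gens A)" and tw: "trivial_word A R w"
  shows "has_area A R (length w * ((TT (length w) + 1) * dehnN A R (Lc (length w)))) w"
proof -
  define n where "n = length w"
  define T where "T = TT n"
  define K where "K = (T + 1) * dehnN A R (Lc n)"
  define u where "u i = rep (take i w)" for i
  define e where "e i = E (u i)" for i
  define Y where "Y i = u 0 @ e 0 @ take i w @ inv_word (e i) @ inv_word (u i)" for i
  have takel: "take i w \<in> lists (gens A)" for i
    using wl by (simp add: in_lists_conv_set) (meson in_set_takeD)
  have uL: "u i \<in> L" and upsi: "\<psi> (u i) = elem A R (take i w)" for i
    using rep[OF takel] by (auto simp: u_def)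
  have ul: "u i \<in> lists (gens A)" for i using uL L_lists by auto
  have el: "e i \<in> lists (gens A)" and elen: "length (e i) \<le> hN (length (u i))"
    and eel: "elem A R (u i @ e i) = \<psi> (u i)" for i
    using E[OF uL] by (auto simp: e_def)
  have ueq: "eqv A R (u i @ e i) (take i w)" for i
  proof -
    have "u i @ e i \<in> lists (gens A)" using ul[of i] el[of i] by simp
    moreover have "elem A R (u i @ e i) = elem A R (take i w)" using eel[of i] upsi[of i] by simp
    ultimately show ?thesis using elem_eq_iff takel by blast
  qed
  have ulen: "i \<le> n \<Longrightarrow> length (u i) \<le> T" for i
  proof -
    assume "i \<le> n"
    then have "length (u i) \<le> c0 + i * (SS + 1)" using rep_len[OF wl] by (simp add: u_def n_def)
    also have "\<dots> \<le> T" using mult_le_mono1[OF \<open>i \<le> n\<close>, of "SS + 1"] by (simp add: T_def TT_def)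
    finally show ?thesis .
  qed
  have hT: "hN T \<le> hN (T + SS)" using hN_mono by simp
  have step: "has_area A R K (u i @ e i @ [w ! i] @ inv_word (e (Suc i)) @ inv_word (u (Suc i)))"
    if i: "i < n" for i
  proof -
    obtain a b where l: "w ! i = (a, b)" by (cases "w ! i")
    note rs = rel_step[OF wl i[unfolded n_def] l]
    have lens: "max (length (u i)) (length (u (Suc i))) \<le> T" using ulen i by simp
    have "\<exists>x\<in>lists (gens A). length x \<le> BB T \<and> has_area A R (T * dehnN A R (2 * BB T + 2)) (u i @ x @ inv_word (u (Suc i)))"
    proof (cases b)
      case True
      then have "(u i, u (Suc i)) \<in> Rel a" "a \<in> A" using rs by (simp_all add: u_def)
      then show ?thesis using adj[of a "u i" "u (Suc i)" T] lens by blast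
    next
      case False
      have "(u (Suc i), u i) \<in> Rel a" "a \<in> A" using rs False by (simp_all add: u_def)
      moreover have "max (length (u (Suc i))) (length (u i)) \<le> T" using lens by simp
      ultimately obtain x where x: "x \<in> lists (gens A)" "length x \<le> BB T"
        "has_area A R (T * dehnN A R (2 * BB T + 2)) (u (Suc i) @ x @ inv_word (u i))"
        using adj[of a "u (Suc i)" "u i" T] by blast
      have "has_area A R (T * dehnN A R (2 * BB T + 2)) (u i @ inv_word x @ inv_word (u (Suc i)))"
        using ha_inv[OF x(3)] by simp
      then show ?thesis using x inv_word_lists by (intro bexI[of _ "inv_word x"]) auto
    qed
    then obtain x where x: "x \<in> lists (gens A)" "length x \<le> BB T"
      "has_area A R (T * dehnN A R (2 * BB T + 2)) (u i @ x @ inv_word (u (Suc i)))" by blast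
    define l' where "l' = w ! i"
    define Si where "Si = u i @ e i @ [l'] @ inv_word (e (Suc i)) @ inv_word (u (Suc i))"
    define Z where "Z = inv_word x @ e i @ [l'] @ inv_word (e (Suc i))"
    define Lad where "Lad = u i @ x @ inv_word (u (Suc i))"
    have tS: "take (Suc i) w = take i w @ [l']" using i by (simp add: take_Suc_conv_app_nth n_def l'_def)
    have l'l: "[l'] \<in> lists (gens A)" using wl i by (simp add: l'_def n_def) (meson in_listsD nth_mem)
    have "eqv A R (u i @ e i @ [l']) (take (Suc i) w)"
      using eqv_app_right[OF ueq[of i], of "[l']"] tS by simp
    then have "eqv A R (u i @ e i @ [l']) (u (Suc i) @ e (Suc i))"
      using ueq[of "Suc i"] eqv_sym eqv_trans by blast
    then have tSi: "trivial_word A R Si" by (simp add: eqv_def Si_def)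
    have fe: "free_eq (Lad @ u (Suc i) @ Z @ inv_word (u (Suc i))) Si"
    proof -
      have "Lad @ u (Suc i) @ Z @ inv_word (u (Suc i)) =
            (u i @ x) @ inv_word (u (Suc i)) @ u (Suc i) @ (inv_word x @ e i @ [l'] @ inv_word (e (Suc i)) @ inv_word (u (Suc i)))"
        by (simp add: Lad_def Z_def)
      also have "free_eq \<dots> ((u i @ x) @ (inv_word x @ e i @ [l'] @ inv_word (e (Suc i)) @ inv_word (u (Suc i))))"
        by (rule free_cancel_mid2)
      also have "\<dots> = u i @ x @ inv_word x @ (e i @ [l'] @ inv_word (e (Suc i)) @ inv_word (u (Suc i)))" by simp
      also have "free_eq \<dots> (u i @ (e i @ [l'] @ inv_word (e (Suc i)) @ inv_word (u (Suc i))))"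
        by (rule free_cancel_mid)
      finally show ?thesis by (simp add: Si_def)
    qed
    have hLad: "has_area A R (T * dehnN A R (2 * BB T + 2)) Lad" using x(3) by (simp add: Lad_def)
    then have tLad: "trivial_word A R Lad" using trivial_iff by blast
    have "trivial_word A R (Lad @ u (Suc i) @ Z @ inv_word (u (Suc i)))"
      using triv_free[OF tSi free_eq_sym[OF fe]] .
    then have "trivial_word A R (u (Suc i) @ Z @ inv_word (u (Suc i)))"
      using triv_cancel_left[OF tLad] by simp
    then have tZ: "trivial_word A R Z" using triv_unconj[OF ul] by blast
    have Zl: "Z \<in> lists (gens A)" using x(1) el l'l by (simp add: Z_def inv_word_lists)
    have "hN (length (u i)) \<le> hN T" "hN (length (u (Suc i))) \<le> hN T"
      using hN_mono ulen[of i] ulen[of "Suc i"] i by auto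
    then have "length (e i) \<le> hN T" "length (e (Suc i)) \<le> hN T"
      using elen[of i] elen[of "Suc i"] by linarith+
    then have "length Z \<le> BB T + 2 * hN T + 1" using x(2) by (simp add: Z_def)
    also have "\<dots> \<le> Lc n" using hT by (simp add: BB_def Lc_def T_def)
    finally have "has_area A R (dehnN A R (Lc n)) Z" using ha_of_triv[OF finA tZ Zl] by blast
    then have "has_area A R (dehnN A R (Lc n)) (u (Suc i) @ Z @ inv_word (u (Suc i)))"
      using ha_conj[OF ul] by blast
    then have "has_area A R (T * dehnN A R (2 * BB T + 2) + dehnN A R (Lc n)) Si"
      using ha_app[OF hLad] ha_free[OF _ fe] by blast
    moreover have "T * dehnN A R (2 * BB T + 2) + dehnN A R (Lc n) \<le> K"
    proof -
      have "2 * BB T + 2 \<le> Lc n" by (simp add: BB_def Lc_def T_def)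
      then have "dehnN A R (2 * BB T + 2) \<le> dehnN A R (Lc n)" using dehnN_mono[OF finA] by blast
      then show ?thesis by (simp add: K_def)
    qed
    ultimately have "has_area A R K Si" using ha_mono by blast
    then show ?thesis by (simp add: Si_def l'_def)
  qed
  have main: "i \<le> n \<Longrightarrow> has_area A R (i * K) (Y i)" for i
  proof (induction i)
    case 0
    have "free_eq (Y 0) []" using free_eq_inv_cancel[of "u 0 @ e 0"] by (simp add: Y_def)
    then show ?case using ha_free[OF ha_nil free_eq_sym] by simp
  next
    case (Suc i)
    then have i: "i < n" by simp
    have "free_eq (Y i @ (u i @ e i @ [w ! i] @ inv_word (e (Suc i)) @ inv_word (u (Suc i)))) (Y (Suc i))"
    proof -
      have "Y i @ (u i @ e i @ [w ! i] @ inv_word (e (Suc i)) @ inv_word (u (Suc i))) =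
            (u 0 @ e 0 @ take i w @ inv_word (e i)) @ inv_word (u i) @ u i @ (e i @ [w ! i] @ inv_word (e (Suc i)) @ inv_word (u (Suc i)))"
        by (simp add: Y_def)
      also have "free_eq \<dots> ((u 0 @ e 0 @ take i w @ inv_word (e i)) @ (e i @ [w ! i] @ inv_word (e (Suc i)) @ inv_word (u (Suc i))))"
        by (rule free_cancel_mid2)
      also have "\<dots> = (u 0 @ e 0 @ take i w) @ inv_word (e i) @ e i @ ([w ! i] @ inv_word (e (Suc i)) @ inv_word (u (Suc i)))"
        by simp
      also have "free_eq \<dots> ((u 0 @ e 0 @ take i w) @ ([w ! i] @ inv_word (e (Suc i)) @ inv_word (u (Suc i))))"
        by (rule free_cancel_mid2)
      also have "\<dots> = Y (Suc i)" using i by (simp add: Y_def take_Suc_conv_app_nth n_def)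
      finally show ?thesis .
    qed
    moreover have "has_area A R (i * K + K) (Y i @ (u i @ e i @ [w ! i] @ inv_word (e (Suc i)) @ inv_word (u (Suc i))))"
      using ha_app[OF Suc.IH step[OF i]] i by simp
    ultimately have "has_area A R (i * K + K) (Y (Suc i))" using ha_free by blast
    then show ?case by (simp add: add.commute)
  qed
  have "eqv A R w []" using tw by (simp add: eqv_def)
  then have "elem A R w = elem A R []" using wl by (simp add: elem_eq_iff)
  then have un: "u n = u 0" by (simp add: u_def n_def rep_def)
  define q where "q = u 0 @ e 0"
  have ql: "q \<in> lists (gens A)" using ul el by (simp add: q_def)
  have en: "e n = e 0" using un by (simp add: e_def)
  have Yn: "Y n = q @ w @ inv_word q" using un en by (simp add: Y_def q_def n_def)
  have "has_area A R (n * K) (inv_word q @ Y n @ inv_word (inv_word q))"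
    using ha_conj[OF inv_word_lists[OF ql] main[OF le_refl]] .
  moreover have "free_eq (inv_word q @ Y n @ inv_word (inv_word q)) w"
  proof -
    have "inv_word q @ Y n @ inv_word (inv_word q) = [] @ inv_word q @ q @ (w @ inv_word q @ q @ [])"
      by (simp add: Yn)
    also have "free_eq \<dots> ([] @ (w @ inv_word q @ q @ []))" by (rule free_cancel_mid2)
    also have "free_eq \<dots> w" using free_cancel_mid2[of w q "[]"] by simp
    finally show ?thesis .
  qed
  ultimately have "has_area A R (n * K) w" using ha_free by blast
  then show ?thesis by (simp add: K_def T_def n_def)
qed

end


lemma dehnN_attained:
  assumes "finite A"
  shows "\<exists>w. w \<in> lists (gens A) \<and> length w \<le> n \<and> trivial_word A R w \<and> dehnN A R n = area A R w"
proof -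
  have "dehnN A R n \<in> {area A R w | w. w \<in> lists (gens A) \<and> length w \<le> n \<and> trivial_word A R w}"
    unfolding dehnN_def
  proof (rule Max_in)
    have "{area A R w | w. w \<in> lists (gens A) \<and> length w \<le> n \<and> trivial_word A R w}
          \<subseteq> area A R ` {w. w \<in> lists (gens A) \<and> length w \<le> n}" by blast
    then show "finite {area A R w | w. w \<in> lists (gens A) \<and> length w \<le> n \<and> trivial_word A R w}"
      using finite_words[OF assms(1)] finite_subset by blast
    have "area A R [] \<in> {area A R w | w. w \<in> lists (gens A) \<and> length w \<le> n \<and> trivial_word A R w}"
      using triv_nil[of A R] by auto
    then show "{area A R w | w. w \<in> lists (gens A) \<and> length w \<le> n \<and> trivial_word A R w} \<noteq> {}" by blast
  qed
  then show ?thesis by blast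
qed

context CA begin

lemma TT_mono: "m \<le> n \<Longrightarrow> TT m \<le> TT n"
  unfolding TT_def using mult_le_mono1 by (metis add_le_mono1 add_left_mono)

lemma Lc_mono: "m \<le> n \<Longrightarrow> Lc m \<le> Lc n"
proof -
  assume "m \<le> n"
  then have "hN (TT m + SS) \<le> hN (TT n + SS)" using hN_mono TT_mono by simp
  then show ?thesis by (simp add: Lc_def)
qed

lemma dehn_bound: "dehnN A R n \<le> n * ((TT n + 1) * dehnN A R (Lc n))"
proof -
  obtain w where w: "w \<in> lists (gens A)" "length w \<le> n" "trivial_word A R w" "dehnN A R n = area A R w"
    using dehnN_attained[OF finA] by blast
  let ?m = "length w"
  have "area A R w \<le> ?m * ((TT ?m + 1) * dehnN A R (Lc ?m))"
    using area_le[OF fill[OF w(1,3)]] .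
  also have "\<dots> \<le> n * ((TT n + 1) * dehnN A R (Lc n))"
    using w(2) TT_mono[OF w(2)] dehnN_mono[OF finA Lc_mono[OF w(2)]]
    by (intro mult_le_mono mult_le_mono1) auto
  finally show ?thesis using w(4) by simp
qed

lemma dehn_bound2:
  assumes "n \<ge> 1"
  shows "dehnN A R n \<le> (c0 + SS + 2) * n ^ 2 * dehnN A R (4 * SS + 4 + 6 * hN ((c0 + 2 * SS + 1) * n))"
proof -
  have a0: "c0 * 1 \<le> c0 * n" "SS * 1 \<le> SS * n" using mult_le_mono2[OF assms] by blast+
  then have a1: "c0 \<le> c0 * n" "SS \<le> SS * n" "n * SS = SS * n" "n * c0 = c0 * n" by (simp_all only: mult_1_right mult.commute)
  have "TT n + 1 \<le> (c0 + SS + 2) * n" using assms a1 unfolding TT_def distrib_left distrib_right by linarith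
  moreover have "TT n + SS \<le> (c0 + 2 * SS + 1) * n" using assms a1 unfolding TT_def distrib_left distrib_right by linarith
  then have "Lc n \<le> 4 * SS + 4 + 6 * hN ((c0 + 2 * SS + 1) * n)" unfolding Lc_def using hN_mono by simp
  then have "dehnN A R (Lc n) \<le> dehnN A R (4 * SS + 4 + 6 * hN ((c0 + 2 * SS + 1) * n))"
    using dehnN_mono[OF finA] by blast
  ultimately have "n * ((TT n + 1) * dehnN A R (Lc n)) \<le> n * (((c0 + SS + 2) * n) * dehnN A R (4 * SS + 4 + 6 * hN ((c0 + 2 * SS + 1) * n)))"
    by (intro mult_le_mono2 mult_le_mono) auto
  then show ?thesis using dehn_bound[of n] by (simp add: power2_eq_square algebra_simps)
qed

end


lemma asym1:
  fixes DN hN :: "nat \<Rightarrow> nat" and f p q :: "nat \<Rightarrow> real" and C1 c2 c3 n0 Qq :: nat and \<epsilon> :: real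
  assumes DNmono: "\<And>m n. m \<le> n \<Longrightarrow> DN m \<le> DN n"
    and core: "\<And>n. n \<ge> 1 \<Longrightarrow> DN n \<le> C1 * n^2 * DN (c2 + 6 * hN (c3 * n))"
    and c3: "c3 > 0"
    and hf: "(\<lambda>n. real (hN n)) \<preceq>\<^sub>F f"
    and eps: "\<epsilon> > 0" "\<And>m. m \<ge> n0 \<Longrightarrow> f m \<ge> \<epsilon>"
    and pD: "p \<preceq>\<^sub>F (\<lambda>n. real (DN n))" and Dq: "(\<lambda>n. real (DN n)) \<preceq>\<^sub>F q" and qF: "inF_on Qq q"
  shows "\<exists>(C::real) (K::nat) (M::nat) (N::nat). K > 0 \<and> M > 0 \<and>
            (\<forall>n\<ge>N. p n \<le> C * (real n)\<^sup>2 * q (nat \<lceil>real K * f (M * n)\<rceil>))"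
proof -
  obtain Np Kp Mp :: nat where p: "Kp > 0" "Mp > 0" "\<And>n. n \<ge> Np \<Longrightarrow> p n \<le> real Kp * real (DN (Mp * n))"
    using pD unfolding preceq_def by blast
  obtain Nh Kh Mh :: nat where h: "Kh > 0" "Mh > 0" "\<And>n. n \<ge> Nh \<Longrightarrow> real (hN n) \<le> real Kh * f (Mh * n)"
    using hf unfolding preceq_def by blast
  obtain Nq Kq Mq :: nat where q: "Kq > 0" "Mq > 0" "\<And>n. n \<ge> Nq \<Longrightarrow> real (DN n) \<le> real Kq * q (Mq * n)"
    using Dq unfolding preceq_def by blast
  have qmono: "\<And>a b. Qq \<le> a \<Longrightarrow> a \<le> b \<Longrightarrow> q a \<le> q b" and qpos: "\<And>a. Qq \<le> a \<Longrightarrow> q a \<ge> 0"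
    using qF unfolding inF_on_def by auto
  obtain k1 :: nat where k1: "real c2 + real Nq + real Qq + 1 < real k1 * \<epsilon>"
    using reals_Archimedean3[OF eps(1)] by blast
  define K0 where "K0 = 6 * Kh + k1"
  define K where "K = Mq * K0"
  define M where "M = Mh * c3 * Mp"
  define N where "N = max Np (max 1 (max Nh n0))"
  define C where "C = real Kp * real C1 * real Mp ^ 2 * real Kq"
  have Mpos: "M > 0" using h p c3 by (simp add: M_def)
  have k1pos: "k1 > 0"
  proof (rule ccontr)
    assume "\<not> k1 > 0" then have "k1 = 0" by simp
    then show False using k1 by simp
  qed
  have Kpos: "K > 0" using q k1pos by (simp add: K_def K0_def)
  have "p n \<le> C * (real n)\<^sup>2 * q (nat \<lceil>real K * f (M * n)\<rceil>)" if n: "n \<ge> N" for n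
  proof -
    define m where "m = Mp * n"
    define F where "F = f (M * n)"
    have n1: "n \<ge> 1" "n \<ge> Np" "n \<ge> Nh" "n \<ge> n0" using n by (auto simp: N_def)
    have m1: "m \<ge> 1" using n1 p(2) by (simp add: m_def)
    have "M * n \<ge> n" using Mpos by simp
    then have "M * n \<ge> n0" using n1 by linarith
    then have Fe: "F \<ge> \<epsilon>" using eps(2) by (simp add: F_def)
    have "c3 * m \<ge> n" using c3 p(2) by (simp add: m_def)
    then have "Nh \<le> c3 * m" using n1 by linarith
    then have "real (hN (c3 * m)) \<le> real Kh * f (Mh * (c3 * m))" using h(3) by blast
    moreover have "Mh * (c3 * m) = M * n" by (simp add: M_def m_def)
    ultimately have hb: "real (hN (c3 * m)) \<le> real Kh * F" by (simp add: F_def)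
    define a where "a = c2 + 6 * hN (c3 * m)"
    have ra: "real a \<le> real c2 + 6 * real Kh * F" using hb by (simp add: a_def)
    have K0F: "real K0 * F \<ge> 6 * real Kh * F + real c2 + real Nq + real Qq + 1"
    proof -
      have "real k1 * F \<ge> real k1 * \<epsilon>" using Fe by (simp add: mult_left_mono)
      then show ?thesis using k1 by (simp add: K0_def algebra_simps)
    qed
    define b where "b = nat \<lfloor>real K0 * F\<rfloor>"
    have kh0: "0 \<le> 6 * real Kh * F" using Fe eps(1) by simp
    then have K0Fpos: "0 \<le> real K0 * F" using K0F by linarith
    then have fb: "real b = of_int \<lfloor>real K0 * F\<rfloor>" by (simp add: b_def)
    have fl: "real K0 * F - 1 < real b" "real b \<le> real K0 * F"
      unfolding fb using floor_correct[of "real K0 * F"] by linarith+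
    have ab: "a \<le> b" using ra fl K0F by linarith
    have "real Nq \<le> real b" "real Qq \<le> real b" using fl K0F kh0 by linarith+
    then have bNq: "b \<ge> Nq" and bQq: "b \<ge> Qq" by simp_all
    have "DN m \<le> C1 * m^2 * DN a" using core[OF m1] by (simp add: a_def)
    then have "real (DN m) \<le> real (C1 * m^2 * DN a)" by (simp only: of_nat_le_iff)
    then have 1: "real (DN m) \<le> real C1 * real m ^ 2 * real (DN a)" by simp
    have 2: "real (DN a) \<le> real (DN b)" using DNmono[OF ab] by simp
    have 3: "real (DN b) \<le> real Kq * q (Mq * b)" using q(3)[OF bNq] .
    have "real (Mq * b) \<le> real K * F" using fl q(2) by (simp add: K_def mult.assoc mult_left_mono)
    also have "\<dots> \<le> real (nat \<lceil>real K * F\<rceil>)" by linarith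
    finally have "Mq * b \<le> nat \<lceil>real K * F\<rceil>" by (simp only: of_nat_le_iff)
    moreover have "Qq \<le> Mq * b" using bQq q(2) by (simp add: le_trans[OF _ mult_le_mono1[of 1 Mq b]])
    ultimately have 4: "q (Mq * b) \<le> q (nat \<lceil>real K * F\<rceil>)" using qmono by blast
    have q0: "q (Mq * b) \<ge> 0" using qpos \<open>Qq \<le> Mq * b\<close> by blast
    have "p n \<le> real Kp * real (DN m)" using p(3)[OF n1(2)] by (simp add: m_def)
    also have "\<dots> \<le> real Kp * (real C1 * real m ^ 2 * (real Kq * q (nat \<lceil>real K * F\<rceil>)))"
    proof -
      have "real (DN a) \<le> real Kq * q (nat \<lceil>real K * F\<rceil>)"
        using 2 3 4 mult_left_mono[OF 4, of "real Kq"] by linarith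
      then have "real C1 * real m ^ 2 * real (DN a) \<le> real C1 * real m ^ 2 * (real Kq * q (nat \<lceil>real K * F\<rceil>))"
        by (simp add: mult_left_mono)
      then show ?thesis using 1 by (simp add: mult_left_mono)
    qed
    also have "\<dots> = C * (real n)\<^sup>2 * q (nat \<lceil>real K * f (M * n)\<rceil>)"
      by (simp add: C_def m_def F_def power_mult_distrib algebra_simps)
    finally show ?thesis .
  qed
  then show ?thesis using Kpos Mpos by blast
qed



lemma ceil_bound:
  fixes K :: nat and F \<epsilon> :: real
  assumes "\<epsilon> > 0" "F \<ge> \<epsilon>"
  shows "0 \<le> real (nat \<lceil>real K * F\<rceil>)" "real (nat \<lceil>real K * F\<rceil>) \<le> (real K + 1 / \<epsilon>) * F"
proof -
  show "0 \<le> real (nat \<lceil>real K * F\<rceil>)" by simp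
  have F0: "F > 0" using assms by linarith
  have "0 \<le> real K * F" using F0 by simp
  then have "real (nat \<lceil>real K * F\<rceil>) = of_int \<lceil>real K * F\<rceil>" by simp
  also have "\<dots> \<le> real K * F + 1" by linarith
  also have "1 \<le> F / \<epsilon>" using assms by simp
  then have "real K * F + 1 \<le> real K * F + F / \<epsilon>" by simp
  also have "\<dots> = (real K + 1 / \<epsilon>) * F" by (simp add: algebra_simps)
  finally show "real (nat \<lceil>real K * F\<rceil>) \<le> (real K + 1 / \<epsilon>) * F" .
qed

lemma asym2:
  fixes f :: "nat \<Rightarrow> real" and d C \<epsilon> :: real and K M N n0 :: nat
  assumes d: "d > 2" and eps: "\<epsilon> > 0" "\<And>m. m \<ge> n0 \<Longrightarrow> f m \<ge> \<epsilon>" and M: "M > 0"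
    and H: "\<And>n. n \<ge> N \<Longrightarrow> real n powr d \<le> C * (real n)\<^sup>2 * real (nat \<lceil>real K * f (M * n)\<rceil>) powr d"
  shows "(\<lambda>n. real n powr ((d - 2) / d)) \<preceq>\<^sub>F f"
proof -
  define c where "c = C powr (1 / d) * (real K + 1 / \<epsilon>)"
  define K' where "K' = nat \<lceil>c\<rceil> + 1"
  have "real n powr ((d - 2) / d) \<le> real K' * f (M * n)" if n: "n \<ge> max N (max 1 n0)" for n
  proof -
    define F where "F = f (M * n)"
    define x where "x = real (nat \<lceil>real K * F\<rceil>)"
    have n1: "n \<ge> N" "n \<ge> 1" "n \<ge> n0" using n by auto
    have "M * n \<ge> n" using M by simp
    then have "M * n \<ge> n0" using n1 by linarith
    then have Fe: "F \<ge> \<epsilon>" using eps by (simp add: F_def)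
    have x0: "0 \<le> x" and xb: "x \<le> (real K + 1 / \<epsilon>) * F" using ceil_bound[OF eps(1) Fe] by (simp_all add: x_def)
    have rn: "real n \<ge> 1" using n1 by simp
    have "1 \<le> real n powr d" using ge_one_powr_ge_zero[OF rn] d by simp
    also have "real n powr d \<le> C * (real n)\<^sup>2 * x powr d" using H[OF n1(1)] by (simp add: x_def F_def)
    finally have one: "1 \<le> C * ((real n)\<^sup>2 * x powr d)" by (simp add: mult.assoc)
    have Cpos: "C > 0"
    proof (rule ccontr)
      assume "\<not> C > 0"
      then have "C * ((real n)\<^sup>2 * x powr d) \<le> 0" by (intro mult_nonpos_nonneg) auto
      then show False using one by linarith
    qed
    have "real n powr (d - 2) = real n powr d / (real n)\<^sup>2" using rn by (simp add: powr_diff)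
    also have "\<dots> \<le> C * x powr d" using H[OF n1(1)] rn by (simp add: x_def F_def divide_le_eq mult.commute mult.left_commute)
    finally have le1: "real n powr (d - 2) \<le> C * x powr d" .
    have "real n powr ((d - 2) / d) = (real n powr (d - 2)) powr (1 / d)" using d by (simp add: powr_powr)
    also have "\<dots> \<le> (C * x powr d) powr (1 / d)" using le1 d by (intro powr_mono2) auto
    also have "\<dots> = C powr (1 / d) * x" using d x0 by (simp add: powr_mult powr_powr)
    also have "\<dots> \<le> C powr (1 / d) * ((real K + 1 / \<epsilon>) * F)" using xb by (simp add: mult_left_mono)
    also have "\<dots> = c * F" by (simp add: c_def)
    also have "\<dots> \<le> real K' * F"
    proof -
      have "c \<le> real K'" unfolding K'_def by linarith
      then show ?thesis using Fe eps(1) by (simp add: mult_right_mono)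
    qed
    finally show ?thesis by (simp add: F_def)
  qed
  then show ?thesis unfolding preceq_def using M by (intro exI[of _ "max N (max 1 n0)"] exI[of _ K'] exI[of _ M]) (auto simp: K'_def)
qed


lemma ln_small:
  fixes c :: real
  shows "\<exists>N::nat. \<forall>n\<ge>N. c + 2 * ln (real n) + 1 \<le> real n / 2"
proof -
  define N where "N = max 256 (nat \<lceil>4 * \<bar>c\<bar> + 4\<rceil>)"
  have "c + 2 * ln (real n) + 1 \<le> real n / 2" if n: "n \<ge> N" for n
  proof -
    have n256: "real n \<ge> 256" using n by (simp add: N_def)
    have nc: "real n \<ge> 4 * \<bar>c\<bar> + 4" using n by (simp add: N_def) linarith
    have npos: "real n > 0" using n256 by simp
    have "ln (real n) = 2 * ln (sqrt (real n))" using npos by (simp add: ln_sqrt)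
    also have "\<dots> \<le> 2 * (sqrt (real n) - 1)" using ln_le_minus_one[of "sqrt (real n)"] npos by simp
    finally have l1: "ln (real n) \<le> 2 * sqrt (real n)" by simp
    have s16: "sqrt (real n) \<ge> 16"
    proof -
      have "sqrt 256 \<le> sqrt (real n)" using n256 by (simp only: real_sqrt_le_iff)
      moreover have "sqrt (256::real) = 16" by (rule real_sqrt_unique) simp_all
      ultimately show ?thesis by simp
    qed
    have "real n = sqrt (real n) * sqrt (real n)" using npos by simp
    moreover have "16 * sqrt (real n) \<le> sqrt (real n) * sqrt (real n)"
      using s16 by (intro mult_right_mono) auto
    ultimately have "16 * sqrt (real n) \<le> real n" by simp
    then show ?thesis using l1 nc by linarith
  qed
  then show ?thesis by blast
qed

lemma asym3:
  fixes f :: "nat \<Rightarrow> real" and C \<epsilon> :: real and K M N n0 :: nat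
  assumes eps: "\<epsilon> > 0" "\<And>m. m \<ge> n0 \<Longrightarrow> f m \<ge> \<epsilon>" and M: "M > 0" and Kp: "K > 0"
    and H: "\<And>n. n \<ge> N \<Longrightarrow> exp (real n) \<le> C * (real n)\<^sup>2 * exp (real (nat \<lceil>real K * f (M * n)\<rceil>))"
  shows "(\<lambda>n. real n) \<preceq>\<^sub>F f"
proof -
  have one: "1 \<le> C * ((real (max N 1))\<^sup>2 * exp (real (nat \<lceil>real K * f (M * max N 1)\<rceil>)))"
  proof -
    have "1 \<le> exp (real (max N 1))" by simp
    also have "\<dots> \<le> C * (real (max N 1))\<^sup>2 * exp (real (nat \<lceil>real K * f (M * max N 1)\<rceil>))" using H by simp
    finally show ?thesis by (simp add: mult.assoc)
  qed
  have Cpos: "C > 0"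
  proof (rule ccontr)
    assume "\<not> C > 0"
    then have "C * ((real (max N 1))\<^sup>2 * exp (real (nat \<lceil>real K * f (M * max N 1)\<rceil>))) \<le> 0"
      by (intro mult_nonpos_nonneg) auto
    then show False using one by linarith
  qed
  obtain N1 where N1: "\<And>n. n \<ge> N1 \<Longrightarrow> ln C + 2 * ln (real n) + 1 \<le> real n / 2"
    using ln_small[of "ln C"] by blast
  have "real n \<le> real (2 * K) * f (M * n)" if n: "n \<ge> max N (max 1 (max n0 N1))" for n
  proof -
    define F where "F = f (M * n)"
    define x where "x = real (nat \<lceil>real K * F\<rceil>)"
    have n1: "n \<ge> N" "n \<ge> 1" "n \<ge> n0" "n \<ge> N1" using n by auto
    have "M * n \<ge> n" using M by simp
    then have "M * n \<ge> n0" using n1 by linarith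
    then have Fe: "F \<ge> \<epsilon>" using eps by (simp add: F_def)
    have F0: "0 \<le> real K * F" using Fe eps(1) by simp
    have xb: "x \<le> real K * F + 1" using F0 by (simp add: x_def)
    have npos: "real n > 0" using n1 by simp
    have "exp (real n) \<le> C * (real n)\<^sup>2 * exp x" using H[OF n1(1)] by (simp add: x_def F_def)
    then have "ln (exp (real n)) \<le> ln (C * (real n)\<^sup>2 * exp x)"
      using Cpos npos by (subst ln_le_cancel_iff) auto
    also have "\<dots> = ln C + 2 * ln (real n) + x" using Cpos npos by (simp add: ln_mult ln_realpow)
    finally have "real n \<le> ln C + 2 * ln (real n) + x" by simp
    then have "real n \<le> real n / 2 + real K * F" using N1[OF n1(4)] xb by linarith
    then show ?thesis by (simp add: F_def)
  qed
  then show ?thesis unfolding preceq_def using M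
    by (intro exI[of _ "max N (max 1 (max n0 N1))"] exI[of _ "2 * K"] exI[of _ M]) (auto simp: Kp)
qed



theorem mainTheorem2:
  fixes A :: "'a set" and R :: "'a letter list set" and f :: "nat \<Rightarrow> real"
  assumes "finite A" and "finite R" and "R \<subseteq> lists (gens A)"
    and "inF f" and "\<exists>Q. inF_on Q f \<and> (\<exists>n\<ge>Q. f n \<noteq> 0)"
    and "in_B A R f"
  shows "(\<forall>p q. inF p \<and> inF q \<and> p \<preceq>\<^sub>F dehn A R \<and> dehn A R \<preceq>\<^sub>F q \<longrightarrow>
            (\<exists>(C::real) (K::nat) (M::nat) (N::nat). K > 0 \<and> M > 0 \<and>
               (\<forall>n\<ge>N. p n \<le> C * (real n)\<^sup>2 * q (nat \<lceil>real K * f (M * n)\<rceil>))))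
       \<and> (\<forall>d::real. d > 2 \<and> (\<lambda>n. real n powr d) \<preceq>\<^sub>F dehn A R \<and> dehn A R \<preceq>\<^sub>F (\<lambda>n. real n powr d)
            \<longrightarrow> (\<lambda>n. real n powr ((d - 2) / d)) \<preceq>\<^sub>F f)
       \<and> ((\<lambda>n. exp (real n)) \<preceq>\<^sub>F dehn A R \<and> dehn A R \<preceq>\<^sub>F (\<lambda>n. exp (real n))
            \<longrightarrow> (\<lambda>n. real n) \<preceq>\<^sub>F f)"
proof -
  obtain L \<psi> where L: "cayley_automatic A R L \<psi>" "ca_function A R L \<psi> \<preceq>\<^sub>F f"
    using assms(6) unfolding in_B_def by blast
  interpret CA A R L \<psi> using assms(1) L(1) by unfold_locales
  obtain Q n0 where Q: "inF_on Q f" "n0 \<ge> Q" "f n0 \<noteq> 0" using assms(5) by blast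
  define \<epsilon> where "\<epsilon> = f n0"
  have epos: "\<epsilon> > 0" using Q unfolding inF_on_def \<epsilon>_def by force
  have eps: "\<And>m. m \<ge> n0 \<Longrightarrow> f m \<ge> \<epsilon>" using Q unfolding inF_on_def \<epsilon>_def by blast
  have hf: "(\<lambda>n. real (hN n)) \<preceq>\<^sub>F f" using L(2) by (simp add: ca_function_hN[abs_def])
  have Deq: "dehn A R = (\<lambda>n. real (dehnN A R n))" by (simp add: dehn_dehnN[abs_def])
  have P1: "\<forall>p q. inF p \<and> inF q \<and> p \<preceq>\<^sub>F dehn A R \<and> dehn A R \<preceq>\<^sub>F q \<longrightarrow>
            (\<exists>(C::real) (K::nat) (M::nat) (N::nat). K > 0 \<and> M > 0 \<and>
               (\<forall>n\<ge>N. p n \<le> C * (real n)\<^sup>2 * q (nat \<lceil>real K * f (M * n)\<rceil>)))"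
  proof (intro allI impI)
    fix p q :: "nat \<Rightarrow> real"
    assume pq: "inF p \<and> inF q \<and> p \<preceq>\<^sub>F dehn A R \<and> dehn A R \<preceq>\<^sub>F q"
    then obtain Qq where Qq: "inF_on Qq q" unfolding inF_def by blast
    show "\<exists>(C::real) (K::nat) (M::nat) (N::nat). K > 0 \<and> M > 0 \<and>
               (\<forall>n\<ge>N. p n \<le> C * (real n)\<^sup>2 * q (nat \<lceil>real K * f (M * n)\<rceil>))"
    proof -
      have dm: "\<And>m n. m \<le> n \<Longrightarrow> dehnN A R m \<le> dehnN A R n" using dehnN_mono[OF assms(1)] by blast
      have core: "\<And>n. n \<ge> 1 \<Longrightarrow> dehnN A R n \<le> (c0 + SS + 2) * n ^ 2 * dehnN A R (4 * SS + 4 + 6 * hN ((c0 + 2 * SS + 1) * n))"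
        by (rule dehn_bound2)
      have c3: "c0 + 2 * SS + 1 > 0" by simp
      have pD: "p \<preceq>\<^sub>F (\<lambda>n. real (dehnN A R n))" and Dq: "(\<lambda>n. real (dehnN A R n)) \<preceq>\<^sub>F q"
        using pq Deq by auto
      show ?thesis using asym1[OF dm core c3 hf epos eps pD Dq Qq] .
    qed
  qed
  have P2: "\<forall>d::real. d > 2 \<and> (\<lambda>n. real n powr d) \<preceq>\<^sub>F dehn A R \<and> dehn A R \<preceq>\<^sub>F (\<lambda>n. real n powr d)
            \<longrightarrow> (\<lambda>n. real n powr ((d - 2) / d)) \<preceq>\<^sub>F f"
  proof (intro allI impI)
    fix d :: real
    assume H: "d > 2 \<and> (\<lambda>n. real n powr d) \<preceq>\<^sub>F dehn A R \<and> dehn A R \<preceq>\<^sub>F (\<lambda>n. real n powr d)"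
    have "inF (\<lambda>n. real n powr d)" unfolding inF_def inF_on_def
      using H by (intro exI[of _ 0]) (auto intro: powr_mono2)
    then obtain C K M N where CK: "K > 0" "M > 0"
      "\<forall>n\<ge>N. real n powr d \<le> C * (real n)\<^sup>2 * real (nat \<lceil>real K * f (M * n)\<rceil>) powr d"
      using P1 H by blast
    show "(\<lambda>n. real n powr ((d - 2) / d)) \<preceq>\<^sub>F f"
      by (rule asym2[OF _ epos eps CK(2)]) (use H CK(3) in auto)
  qed
  have P3: "(\<lambda>n. exp (real n)) \<preceq>\<^sub>F dehn A R \<and> dehn A R \<preceq>\<^sub>F (\<lambda>n. exp (real n))
            \<longrightarrow> (\<lambda>n. real n) \<preceq>\<^sub>F f"
  proof
    assume H: "(\<lambda>n. exp (real n)) \<preceq>\<^sub>F dehn A R \<and> dehn A R \<preceq>\<^sub>F (\<lambda>n. exp (real n))"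
    have "inF (\<lambda>n. exp (real n))" unfolding inF_def inF_on_def by (intro exI[of _ 0]) auto
    then obtain C K M N where CK: "K > 0" "M > 0"
      "\<forall>n\<ge>N. exp (real n) \<le> C * (real n)\<^sup>2 * exp (real (nat \<lceil>real K * f (M * n)\<rceil>))"
      using P1 H by blast
    show "(\<lambda>n. real n) \<preceq>\<^sub>F f"
      by (rule asym3[OF epos eps CK(2) CK(1)]) (use CK(3) in auto)
  qed
  show ?thesis using P1 P2 P3 by blast
qed


end
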